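(* Let $\alpha\in\mathbb{N}$. Suppose $g:\mathbb{R}\to\mathbb{R}$ is such that $g^{(\tau)}$ is absolutely continuous on every compact interval for $\tau=0,\dots,\alpha-1$, $g^{(\alpha)}\in L^2(\mathbb{R})$, \[ \|g\|_\alpha^*:=\sup_{I\subset\mathbb{R},\ |I|<\infty}\left(\sum_{\tau=0}^{\alpha-1}\left(\int_I g^{(\tau)}(x)\,\mathrm{d}x\right)^2+\int_I|g^{(\alpha)}(x)|^2\,\mathrm{d}x\right)^{1/2}<\infty, \] (supremum over intervals $I$ of finite length) and, for some $\varepsilon\in(0,1)$, \[ \|g\|_{\alpha,\mathrm{decay}}:=\sup_{x\in\mathbb{R},\ \tau\in\{0,\dots,\alpha-1\}}\left|\mathrm{e}^{(1-\varepsilon)x^2/2}g^{(\tau)}(x)\right|<\infty. \] Let $\gamma:\mathbb{N}\to[0,\infty)$ be non-decreasing with $\lim_{n\to\infty}\gamma(n)=\infty$, and let $\gamma^{-1}(\alpha):=\min\{m\in\mathbb{N}: \gamma(m)\geq\alpha\}$. Then for every integer $n\geq\gamma^{-1}(\alpha)$, with $\tilde T=\sqrt{\frac{2}{1-\varepsilon}\gamma(n)\ln(n)}$, \[ \left|\int_\mathbb{R}g(x)\,\mathrm{d}x-Q_{n,\tilde T}^*(g)\right|\leq C\left(\|g\|_\alpha^*+\|g\|_{\alpha,\mathrm{decay}}\right)\frac{(\gamma(n)\ln n)^{\alpha/2+1/4}}{n^\alpha}, \] where the constant $C$ is independent of $n$ and $g$ but depends on $\alpha$ and $\varepsilon$.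
   Context: For $T>0$ and $n\in\mathbb{N}$, the trapezoidal rule is $Q_{n,T}^*(g)=\frac{2T}{n}\sum_{j=0}^{n-1}g(\xi_j^* )$ with $\xi_j^*=\frac{2T}{n}j-T$, $j=0,\dots,n-1$. *)

theory Defs
  imports "HOL-Analysis.Analysis"
begin

text \<open>Absolute continuity of a real function on a compact interval [a,b]
  (classical epsilon-delta definition via finite families of pairwise
  non-overlapping subintervals).\<close>
definition abs_cont_on_interval :: "(real \<Rightarrow> real) \<Rightarrow> real \<Rightarrow> real \<Rightarrow> bool" where
  "abs_cont_on_interval f a b \<longleftrightarrow>
     (\<forall>e>0. \<exists>d>0. \<forall>(n::nat) (l::nat \<Rightarrow> real) (r::nat \<Rightarrow> real).
        (\<forall>i<n. a \<le> l i \<and> l i < r i \<and> r i \<le> b) \<and>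
        (\<forall>i<n. \<forall>j<n. i \<noteq> j \<longrightarrow> {l i<..<r i} \<inter> {l j<..<r j} = {}) \<and>
        (\<Sum>i<n. r i - l i) < d
        \<longrightarrow> (\<Sum>i<n. \<bar>f (r i) - f (l i)\<bar>) < e)"

text \<open>Trapezoidal rule Q*_{n,T}(g) = (2T/n) sum_{j=0}^{n-1} g(2T j/n - T).\<close>
definition trap_rule :: "nat \<Rightarrow> real \<Rightarrow> (real \<Rightarrow> real) \<Rightarrow> real" where
  "trap_rule n T g = (2 * T / real n) * (\<Sum>j<n. g (2 * T / real n * real j - T))"

text \<open>The quantity inside the supremum defining the norm ||g||*_alpha,
  for the interval [a,b]; G tau plays the role of g^(tau).\<close>
definition star_norm_term :: "nat \<Rightarrow> (nat \<Rightarrow> real \<Rightarrow> real) \<Rightarrow> real \<Rightarrow> real \<Rightarrow> real" where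
  "star_norm_term \<alpha> G a b =
     sqrt ((\<Sum>\<tau><\<alpha>. (LINT x:{a..b}|lborel. G \<tau> x)\<^sup>2) + (LINT x:{a..b}|lborel. (G \<alpha> x)\<^sup>2))"

definition star_norm :: "nat \<Rightarrow> (nat \<Rightarrow> real \<Rightarrow> real) \<Rightarrow> real" where
  "star_norm \<alpha> G = (SUP ab\<in>{(a, b). a \<le> b}. star_norm_term \<alpha> G (fst ab) (snd ab))"

definition decay_norm_term :: "real \<Rightarrow> (nat \<Rightarrow> real \<Rightarrow> real) \<Rightarrow> real \<Rightarrow> nat \<Rightarrow> real" where
  "decay_norm_term \<epsilon> G x \<tau> = \<bar>exp ((1 - \<epsilon>) * x\<^sup>2 / 2) * G \<tau> x\<bar>"

definition decay_norm :: "nat \<Rightarrow> real \<Rightarrow> (nat \<Rightarrow> real \<Rightarrow> real) \<Rightarrow> real" where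
  "decay_norm \<alpha> \<epsilon> G = (SUP p\<in>UNIV \<times> {..<\<alpha>}. decay_norm_term \<epsilon> G (fst p) (snd p))"

text \<open>gamma^{-1}(alpha) = min { m. gamma m \<ge> alpha }.\<close>
definition gamma_inv :: "(nat \<Rightarrow> real) \<Rightarrow> nat \<Rightarrow> nat" where
  "gamma_inv \<gamma> \<alpha> = (LEAST m. \<gamma> m \<ge> real \<alpha>)"

end

theory Submission
  imports Defs "HOL-Analysis.Analysis"
begin

lemma acD:
  assumes "abs_cont_on_interval F a b" "e > 0"
  shows "\<exists>d>0. \<forall>(n::nat) l r. (\<forall>i<n. a \<le> l i \<and> l i < r i \<and> r i \<le> b) \<longrightarrow>
        (\<forall>i<n. \<forall>j<n. i \<noteq> j \<longrightarrow> {l i<..<r i} \<inter> {l j<..<r j} = {}) \<longrightarrow>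
        (\<Sum>i<n. r i - l i) < d \<longrightarrow> (\<Sum>i<n. \<bar>F (r i) - F (l i)\<bar>) < e"
proof -
  obtain d where "d > 0" and H: "\<forall>(n::nat) l r. (\<forall>i<n. a \<le> l i \<and> l i < r i \<and> r i \<le> b) \<and>
        (\<forall>i<n. \<forall>j<n. i \<noteq> j \<longrightarrow> {l i<..<r i} \<inter> {l j<..<r j} = {}) \<and>
        (\<Sum>i<n. r i - l i) < d \<longrightarrow> (\<Sum>i<n. \<bar>F (r i) - F (l i)\<bar>) < e"
    using assms unfolding abs_cont_on_interval_def by blast
  then show ?thesis by blast
qed

lemma ac_cont:
  assumes "abs_cont_on_interval F a b"
  shows "continuous_on {a..b} F"
  unfolding continuous_on_iff
proof (intro ballI allI impI)
  fix x e :: real assume x: "x \<in> {a..b}" and e: "0 < e"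
  obtain d where d: "d > 0" and H: "\<forall>(n::nat) l r. (\<forall>i<n. a \<le> l i \<and> l i < r i \<and> r i \<le> b) \<longrightarrow>
        (\<forall>i<n. \<forall>j<n. i \<noteq> j \<longrightarrow> {l i<..<r i} \<inter> {l j<..<r j} = {}) \<longrightarrow>
        (\<Sum>i<n. r i - l i) < d \<longrightarrow> (\<Sum>i<n. \<bar>F (r i) - F (l i)\<bar>) < e"
    using acD[OF assms e] by blast
  show "\<exists>d>0. \<forall>x'\<in>{a..b}. dist x' x < d \<longrightarrow> dist (F x') (F x) < e"
  proof (intro exI[of _ d] conjI ballI impI)
    fix y assume y: "y \<in> {a..b}" and dy: "dist y x < d"
    show "dist (F y) (F x) < e"
    proof (cases "y = x")
      case True then show ?thesis using e by simp
    next
      case False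
      have m: "max x y - min x y = \<bar>y - x\<bar>" "\<bar>F (max x y) - F (min x y)\<bar> = \<bar>F y - F x\<bar>"
        by (auto simp: max_def min_def abs_minus_commute)
      have "(\<Sum>i<(1::nat). \<bar>F ((\<lambda>_. max x y) i) - F ((\<lambda>_. min x y) i)\<bar>) < e"
        using H[rule_format, of 1 "\<lambda>_. min x y" "\<lambda>_. max x y"] x y False dy m
        by (auto simp: dist_real_def min_def max_def)
      then show ?thesis using m by (simp add: dist_real_def)
    qed
  qed (use d in auto)
qed

lemma ac_sub:
  assumes "abs_cont_on_interval F a b" "a \<le> c" "d \<le> b"
  shows "abs_cont_on_interval F c d"
  unfolding abs_cont_on_interval_def
proof (intro allI impI)
  fix e :: real assume e: "e > 0"
  then obtain del where del: "del > 0" and H: "\<forall>(n::nat) l r. (\<forall>i<n. a \<le> l i \<and> l i < r i \<and> r i \<le> b) \<longrightarrow>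
        (\<forall>i<n. \<forall>j<n. i \<noteq> j \<longrightarrow> {l i<..<r i} \<inter> {l j<..<r j} = {}) \<longrightarrow>
        (\<Sum>i<n. r i - l i) < del \<longrightarrow> (\<Sum>i<n. \<bar>F (r i) - F (l i)\<bar>) < e"
    using acD[OF assms(1) e] by blast
  show "\<exists>del>0. \<forall>(n::nat) l r. (\<forall>i<n. c \<le> l i \<and> l i < r i \<and> r i \<le> d) \<and>
        (\<forall>i<n. \<forall>j<n. i \<noteq> j \<longrightarrow> {l i<..<r i} \<inter> {l j<..<r j} = {}) \<and>
        (\<Sum>i<n. r i - l i) < del \<longrightarrow> (\<Sum>i<n. \<bar>F (r i) - F (l i)\<bar>) < e"
  proof (intro exI[of _ del] conjI allI impI)
    fix n :: nat and l r
    assume A: "(\<forall>i<n. c \<le> l i \<and> l i < r i \<and> r i \<le> d) \<and>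
        (\<forall>i<n. \<forall>j<n. i \<noteq> j \<longrightarrow> {l i<..<r i} \<inter> {l j<..<r j} = {}) \<and>
        (\<Sum>i<n. r i - l i) < del"
    show "(\<Sum>i<n. \<bar>F (r i) - F (l i)\<bar>) < e"
      by (rule H[rule_format]; use A assms(2,3) in force)
  qed (use del in auto)
qed

lemma ac_diff:
  assumes F: "abs_cont_on_interval F a b" and P: "abs_cont_on_interval P a b"
  shows "abs_cont_on_interval (\<lambda>x. F x - P x) a b"
  unfolding abs_cont_on_interval_def
proof (intro allI impI)
  fix e :: real assume e: "e > 0"
  obtain d1 where d1: "d1 > 0" and H1: "\<forall>(n::nat) l r. (\<forall>i<n. a \<le> l i \<and> l i < r i \<and> r i \<le> b) \<longrightarrow>
        (\<forall>i<n. \<forall>j<n. i \<noteq> j \<longrightarrow> {l i<..<r i} \<inter> {l j<..<r j} = {}) \<longrightarrow>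
        (\<Sum>i<n. r i - l i) < d1 \<longrightarrow> (\<Sum>i<n. \<bar>F (r i) - F (l i)\<bar>) < e/2"
    using acD[OF F half_gt_zero[OF e]] by blast
  obtain d2 where d2: "d2 > 0" and H2: "\<forall>(n::nat) l r. (\<forall>i<n. a \<le> l i \<and> l i < r i \<and> r i \<le> b) \<longrightarrow>
        (\<forall>i<n. \<forall>j<n. i \<noteq> j \<longrightarrow> {l i<..<r i} \<inter> {l j<..<r j} = {}) \<longrightarrow>
        (\<Sum>i<n. r i - l i) < d2 \<longrightarrow> (\<Sum>i<n. \<bar>P (r i) - P (l i)\<bar>) < e/2"
    using acD[OF P half_gt_zero[OF e]] by blast
  show "\<exists>d>0. \<forall>(n::nat) l r. (\<forall>i<n. a \<le> l i \<and> l i < r i \<and> r i \<le> b) \<and>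
        (\<forall>i<n. \<forall>j<n. i \<noteq> j \<longrightarrow> {l i<..<r i} \<inter> {l j<..<r j} = {}) \<and>
        (\<Sum>i<n. r i - l i) < d \<longrightarrow> (\<Sum>i<n. \<bar>(F (r i) - P (r i)) - (F (l i) - P (l i))\<bar>) < e"
  proof (intro exI[of _ "min d1 d2"] conjI allI impI)
    fix n :: nat and l r
    assume A: "(\<forall>i<n. a \<le> l i \<and> l i < r i \<and> r i \<le> b) \<and>
        (\<forall>i<n. \<forall>j<n. i \<noteq> j \<longrightarrow> {l i<..<r i} \<inter> {l j<..<r j} = {}) \<and>
        (\<Sum>i<n. r i - l i) < min d1 d2"
    have "(\<Sum>i<n. \<bar>(F (r i) - P (r i)) - (F (l i) - P (l i))\<bar>) \<le>
          (\<Sum>i<n. \<bar>F (r i) - F (l i)\<bar> + \<bar>P (r i) - P (l i)\<bar>)"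
      by (intro sum_mono) linarith
    also have "\<dots> = (\<Sum>i<n. \<bar>F (r i) - F (l i)\<bar>) + (\<Sum>i<n. \<bar>P (r i) - P (l i)\<bar>)"
      by (simp add: sum.distrib)
    also have "\<dots> < e/2 + e/2"
      using H1[rule_format, of n l r] H2[rule_format, of n l r] A by (intro add_strict_mono) auto
    finally show "(\<Sum>i<n. \<bar>(F (r i) - P (r i)) - (F (l i) - P (l i))\<bar>) < e" by simp
  qed (use d1 d2 in auto)
qed

lemma lipschitz_ac:
  assumes L: "\<And>x y. x \<in> {a..b} \<Longrightarrow> y \<in> {a..b} \<Longrightarrow> \<bar>P x - P y\<bar> \<le> M * \<bar>x - y\<bar>"
  shows "abs_cont_on_interval P a b"
  unfolding abs_cont_on_interval_def
proof (intro allI impI)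
  fix e :: real assume e: "e > 0"
  define M' where "M' = max M 1"
  have M': "M' > 0" "M \<le> M'" by (auto simp: M'_def)
  show "\<exists>d>0. \<forall>(n::nat) l r. (\<forall>i<n. a \<le> l i \<and> l i < r i \<and> r i \<le> b) \<and>
        (\<forall>i<n. \<forall>j<n. i \<noteq> j \<longrightarrow> {l i<..<r i} \<inter> {l j<..<r j} = {}) \<and>
        (\<Sum>i<n. r i - l i) < d \<longrightarrow> (\<Sum>i<n. \<bar>P (r i) - P (l i)\<bar>) < e"
  proof (intro exI[of _ "e / M'"] conjI allI impI)
    fix n :: nat and l r
    assume A: "(\<forall>i<n. a \<le> l i \<and> l i < r i \<and> r i \<le> b) \<and>
        (\<forall>i<n. \<forall>j<n. i \<noteq> j \<longrightarrow> {l i<..<r i} \<inter> {l j<..<r j} = {}) \<and>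
        (\<Sum>i<n. r i - l i) < e / M'"
    have "(\<Sum>i<n. \<bar>P (r i) - P (l i)\<bar>) \<le> (\<Sum>i<n. M' * (r i - l i))"
    proof (intro sum_mono)
      fix i assume "i \<in> {..<n}"
      then have i: "a \<le> l i" "l i < r i" "r i \<le> b" using A by auto
      have "\<bar>P (r i) - P (l i)\<bar> \<le> M * \<bar>r i - l i\<bar>" using L[of "r i" "l i"] i by auto
      also have "\<dots> = M * (r i - l i)" using i by simp
      also have "\<dots> \<le> M' * (r i - l i)" using i M' by (intro mult_right_mono) auto
      finally show "\<bar>P (r i) - P (l i)\<bar> \<le> M' * (r i - l i)" .
    qed
    also have "\<dots> = M' * (\<Sum>i<n. r i - l i)" by (simp add: sum_distrib_left)
    also have "\<dots> < M' * (e / M')" using A M' by (intro mult_strict_left_mono) auto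
    also have "\<dots> = e" using M' by simp
    finally show "(\<Sum>i<n. \<bar>P (r i) - P (l i)\<bar>) < e" .
  qed (use e M' in auto)
qed

lemma det1_scaleR: "det (matrix ((*\<^sub>R) c) :: real^1^1) = c"
  by simp

lemma lift_lmeasurable:
  fixes A :: "real set"
  assumes "(vec ` A :: (real^1) set) \<in> lmeasurable"
  shows "A \<in> lmeasurable \<and> measure lebesgue A = measure lebesgue (vec ` A :: (real^1) set)"
proof -
  have i: "((\<lambda>x::real^1. 1::real) has_integral measure lebesgue (vec ` A :: (real^1) set)) (vec ` A)"
    using assms by (simp add: has_integral_iff lmeasurable_iff_integrable_on lmeasure_integral)
  have "(((\<lambda>x::real^1. 1::real) \<circ> vec) has_integral measure lebesgue (vec ` A :: (real^1) set)) ((\<lambda>x. x $ 1) ` (vec ` A :: (real^1) set))"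
    by (rule has_integral_vec1_I[OF i])
  moreover have "(\<lambda>x. x $ 1) ` (vec ` A :: (real^1) set) = A"
    by (force simp: image_comp o_def)
  ultimately have "((\<lambda>x::real. 1::real) has_integral measure lebesgue (vec ` A :: (real^1) set)) A"
    by (simp add: o_def)
  then show ?thesis
    by (metis has_integral_iff lmeasurable_iff_integrable_on lmeasure_integral)
qed

lemma measure_image_real:
  fixes F g :: "real \<Rightarrow> real"
  assumes S: "S \<in> sets lebesgue"
    and der: "\<And>x. x \<in> S \<Longrightarrow> (F has_real_derivative g x) (at x within S)"
    and int: "(\<lambda>x. \<bar>g x\<bar>) integrable_on S"
  shows "F ` S \<in> lmeasurable \<and> measure lebesgue (F ` S) \<le> integral S (\<lambda>x. \<bar>g x\<bar>)"
proof -
  let ?lift = "vec :: real \<Rightarrow> real^1"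
  let ?drop = "(\<lambda>x::real^1. x $ 1)"
  have S': "?lift ` S \<in> sets lebesgue"
    by (auto intro: differentiable_image_in_sets_lebesgue [OF S] differentiable_vec)
  have "((\<lambda>x. vec (F (x $ 1))) has_derivative (*\<^sub>R) (g z)) (at (vec z) within ?lift ` S)"
    if "z \<in> S" for z
    using der [OF that]
    by (simp add: has_real_derivative_iff_has_vector_derivative has_vector_derivative_def has_derivative_vector_1)
  then have der': "\<And>x. x \<in> ?lift ` S \<Longrightarrow>
        (?lift \<circ> F \<circ> ?drop has_derivative (*\<^sub>R) (g (?drop x))) (at x within ?lift ` S)"
    by (auto simp: o_def)
  have dropS: "?drop ` ?lift ` S = S" by (force simp: image_comp o_def)
  have intS: "((\<lambda>x. \<bar>g x\<bar>) has_integral integral S (\<lambda>x. \<bar>g x\<bar>)) S"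
    using int by (simp add: has_integral_iff)
  have "((\<lambda>x::real^1. \<bar>g (x$1)\<bar>) has_integral integral S (\<lambda>x. \<bar>g x\<bar>)) (?lift ` S)"
  proof (rule has_integral_vec1_D)
    show "((\<lambda>x::real^1. \<bar>g (x$1)\<bar>) \<circ> vec has_integral integral S (\<lambda>x. \<bar>g x\<bar>)) (?drop ` ?lift ` S)"
      using intS dropS by (simp add: o_def)
  qed
  then have int': "(\<lambda>x::real^1. \<bar>det (matrix ((*\<^sub>R) (g (?drop x))) :: real^1^1)\<bar>) integrable_on ?lift ` S"
    and inteq: "integral (?lift ` S) (\<lambda>x::real^1. \<bar>det (matrix ((*\<^sub>R) (g (?drop x))) :: real^1^1)\<bar>) = integral S (\<lambda>x. \<bar>g x\<bar>)"
    by (auto simp: det1_scaleR has_integral_iff)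
  have M: "(?lift \<circ> F \<circ> ?drop) ` ?lift ` S \<in> lmeasurable"
    and Mle: "measure lebesgue ((?lift \<circ> F \<circ> ?drop) ` ?lift ` S) \<le> integral (?lift ` S) (\<lambda>x::real^1. \<bar>det (matrix ((*\<^sub>R) (g (?drop x))) :: real^1^1)\<bar>)"
    using measurable_differentiable_image[OF S' der' int'] measure_differentiable_image[OF S' der' int'] by auto
  have eqim: "(?lift \<circ> F \<circ> ?drop) ` ?lift ` S = ?lift ` (F ` S)"
    by (force simp: image_comp o_def)
  show ?thesis
    using lift_lmeasurable[of "F ` S"] M Mle inteq unfolding eqim by auto
qed

lemma ac_lusinN:
  assumes F: "abs_cont_on_interval F a b" and N: "negligible N" and Nab: "N \<subseteq> {a..b}"
  shows "negligible (F ` N)"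
proof (cases "a < b")
  case False
  then have "N \<subseteq> {a}" using Nab by auto
  then have "F ` N \<subseteq> {F a}" by auto
  then show ?thesis using negligible_subset negligible_sing by metis
next
  case ab: True
  have contF: "continuous_on {a..b} F" using ac_cont[OF F] .
  show ?thesis
    unfolding negligible_outer_le
  proof (intro allI impI)
    fix e :: real assume e: "e > 0"
    obtain d where d: "d > 0" and H: "\<forall>(n::nat) l r. (\<forall>i<n. a \<le> l i \<and> l i < r i \<and> r i \<le> b) \<longrightarrow>
        (\<forall>i<n. \<forall>j<n. i \<noteq> j \<longrightarrow> {l i<..<r i} \<inter> {l j<..<r j} = {}) \<longrightarrow>
        (\<Sum>i<n. r i - l i) < d \<longrightarrow> (\<Sum>i<n. \<bar>F (r i) - F (l i)\<bar>) < e"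
      using acD[OF F e] by blast
    obtain U where U: "open U" "N \<subseteq> U" "U - N \<in> lmeasurable" "emeasure lebesgue (U - N) < ennreal d"
      using sets_lebesgue_outer_open[OF negligible_imp_sets[OF N] d] by blast
    have Ueq: "U = (U - N) \<union> N" using U(2) by auto
    have Um: "U \<in> lmeasurable"
      using U(3) N by (metis Ueq fmeasurable.Un negligible_imp_measurable)
    have "measure lebesgue U = measure lebesgue (U - N)"
      using measure_Un_null_set[of "U - N" lebesgue N] U(3) N Ueq
      by (metis fmeasurable_def mem_Collect_eq negligible_iff_null_sets sets.Int_space_eq2)
    also have "\<dots> < d"
      using U(3) U(4) by (simp add: emeasure_eq_measure2 ennreal_less_iff d less_imp_le)
    finally have Ud: "measure lebesgue U < d" .
    define g where "g x = (if x \<in> U then U else ball x 1)" for x :: real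
    have gauge: "gauge g" unfolding gauge_def g_def using U(1) by auto
    have c1: "N \<subseteq> cbox a b" using Nab by simp
    have c2: "box a b \<noteq> {}" using ab by simp
    show "\<exists>T. F ` N \<subseteq> T \<and> T \<in> lmeasurable \<and> measure lebesgue T \<le> e"
    proof (rule covering_lemma[OF c1 c2 gauge])
    fix \<D> assume D: "countable \<D>" "\<Union>\<D> \<subseteq> cbox a b"
      "\<And>K. K \<in> \<D> \<Longrightarrow> interior K \<noteq> {} \<and> (\<exists>c d. K = cbox c d)"
      "pairwise (\<lambda>A B. interior A \<inter> interior B = {}) \<D>"
      "\<And>K. K \<in> \<D> \<Longrightarrow> \<exists>x \<in> N \<inter> K. K \<subseteq> g x"
      "\<And>u v. cbox u v \<in> \<D> \<Longrightarrow> \<exists>n. \<forall>i \<in> Basis. v \<bullet> i - u \<bullet> i = (b \<bullet> i - a \<bullet> i) / 2^n"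
      "N \<subseteq> \<Union>\<D>"
    have KU: "K \<subseteq> U" if KD: "K \<in> \<D>" for K
    proof -
      obtain x where x: "x \<in> N \<inter> K" "K \<subseteq> g x" using D(5)[OF KD] by blast
      then have "x \<in> U" using U(2) by blast
      then show ?thesis using x(2) unfolding g_def by simp
    qed
    have Kab: "K \<subseteq> {a..b}" if "K \<in> \<D>" for K
      using D(2) that by auto
    have Kiv: "\<exists>c d. c < d \<and> K = {c..d}" if KD: "K \<in> \<D>" for K
    proof -
      obtain c d where "K = cbox c d" using D(3)[OF KD] by blast
      moreover have "interior K \<noteq> {}" using D(3)[OF KD] by blast
      ultimately show ?thesis by (intro exI[of _ c] exI[of _ d]) auto
    qed
    have pq: "\<exists>p q. p \<in> K \<and> q \<in> K \<and> (\<forall>y\<in>K. F p \<le> F y \<and> F y \<le> F q)" if KD: "K \<in> \<D>" for K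
    proof -
      obtain c d where cd: "c < d" "K = {c..d}" using Kiv[OF KD] by blast
      have cK: "continuous_on K F" using contF Kab[OF KD] continuous_on_subset by blast
      have "compact K" "K \<noteq> {}" using cd by auto
      then obtain p q where "p \<in> K" "\<forall>y\<in>K. F p \<le> F y" "q \<in> K" "\<forall>y\<in>K. F y \<le> F q"
        using continuous_attains_inf[OF _ _ cK] continuous_attains_sup[OF _ _ cK] by metis
      then show ?thesis by blast
    qed
    obtain p q where pq: "\<And>K. K \<in> \<D> \<Longrightarrow> p K \<in> K \<and> q K \<in> K \<and> (\<forall>y\<in>K. F (p K) \<le> F y \<and> F y \<le> F (q K))"
      using pq by metis
    define I where "I K = {F (p K) .. F (q K)}" for K
    have FK: "F ` K \<subseteq> I K" if "K \<in> \<D>" for K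
      using pq[OF that] unfolding I_def by auto
    have Im: "I K \<in> fmeasurable lebesgue" for K unfolding I_def by simp
    have bound: "measure lebesgue (\<Union>K\<in>\<D>'. I K) \<le> e" if D': "\<D>' \<subseteq> \<D>" "finite \<D>'" for \<D>'
    proof -
      define D'' where "D'' = {K\<in>\<D>'. F (p K) \<noteq> F (q K)}"
      have finD'': "finite D''" using D'(2) unfolding D''_def by auto
      have "measure lebesgue (\<Union>K\<in>\<D>'. I K) \<le> (\<Sum>K\<in>\<D>'. measure lebesgue (I K))"
        by (rule measure_UNION_le) (use D'(2) Im in auto)
      also have "\<dots> = (\<Sum>K\<in>\<D>'. F (q K) - F (p K))"
      proof (rule sum.cong)
        fix K assume "K \<in> \<D>'"
        then have "F (p K) \<le> F (q K)" using pq[of K] D'(1) by auto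
        then show "measure lebesgue (I K) = F (q K) - F (p K)" unfolding I_def by simp
      qed simp
      also have "\<dots> = (\<Sum>K\<in>D''. F (q K) - F (p K))"
        unfolding D''_def by (rule sum.mono_neutral_right) (use D'(2) in auto)
      also have "\<dots> \<le> e"
      proof -
        define l where "l K = min (p K) (q K)" for K
        define r where "r K = max (p K) (q K)" for K
        have lr: "l K < r K" "a \<le> l K" "r K \<le> b" "{l K<..<r K} \<subseteq> interior K" "\<bar>F (r K) - F (l K)\<bar> = F (q K) - F (p K)"
          if KD: "K \<in> D''" for K
        proof -
          have K: "K \<in> \<D>" "F (p K) \<noteq> F (q K)" using KD D'(1) unfolding D''_def by auto
          obtain c d where cd: "c < d" "K = {c..d}" using Kiv[OF K(1)] by blast
          have pqK: "p K \<in> K" "q K \<in> K" "F (p K) \<le> F (q K)" using pq[OF K(1)] by auto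
          have "p K \<noteq> q K" using K(2) by auto
          then show "l K < r K" unfolding l_def r_def by auto
          show "a \<le> l K" "r K \<le> b" using Kab[OF K(1)] pqK unfolding l_def r_def by auto
          show "{l K<..<r K} \<subseteq> interior K" using pqK cd unfolding l_def r_def by auto
          show "\<bar>F (r K) - F (l K)\<bar> = F (q K) - F (p K)"
            using pqK unfolding l_def r_def by (auto simp: min_def max_def)
        qed
        obtain h where h: "bij_betw h {0..<card D''} D''" using ex_bij_betw_nat_finite[OF finD''] by blast
        define m where "m = card D''"
        have hin: "h i \<in> D''" if "i < m" for i using h that unfolding m_def bij_betw_def by auto
        have hinj: "h i \<noteq> h j" if "i < m" "j < m" "i \<noteq> j" for i j
          using h that unfolding m_def bij_betw_def inj_on_def by auto
        have disj: "{l K<..<r K} \<inter> {l K'<..<r K'} = {}" if "K \<in> D''" "K' \<in> D''" "K \<noteq> K'" for K K'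
        proof -
          have "interior K \<inter> interior K' = {}" using D(4) that D'(1) unfolding D''_def pairwise_def by auto
          then show ?thesis using lr(4)[OF that(1)] lr(4)[OF that(2)] by blast
        qed
        have sumeq1: "(\<Sum>i<m. r (h i) - l (h i)) = (\<Sum>K\<in>D''. r K - l K)"
          using sum.reindex_bij_betw[OF h, of "\<lambda>K. r K - l K"] unfolding m_def by (simp add: atLeast0LessThan)
        have sumeq2: "(\<Sum>i<m. \<bar>F (r (h i)) - F (l (h i))\<bar>) = (\<Sum>K\<in>D''. \<bar>F (r K) - F (l K)\<bar>)"
          using sum.reindex_bij_betw[OF h, of "\<lambda>K. \<bar>F (r K) - F (l K)\<bar>"] unfolding m_def by (simp add: atLeast0LessThan)
        have "(\<Sum>K\<in>D''. r K - l K) = (\<Sum>K\<in>D''. measure lebesgue {l K<..<r K})"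
        proof (rule sum.cong)
          fix K assume "K \<in> D''"
          then have "l K \<le> r K" using lr(1) less_imp_le by blast
          then show "r K - l K = measure lebesgue {l K<..<r K}" by simp
        qed simp
        also have "\<dots> = measure lebesgue (\<Union>K\<in>D''. {l K<..<r K})"
        proof (rule measure_finite_Union[symmetric])
          show "disjoint_family_on (\<lambda>K. {l K<..<r K}) D''"
            using disj by (auto simp: disjoint_family_on_def)
          fix K assume "K \<in> D''"
          then have "l K \<le> r K" using lr(1) less_imp_le by blast
          then show "emeasure lebesgue {l K<..<r K} \<noteq> \<infinity>" by simp
        qed (use finD'' in auto)
        also have "\<dots> \<le> measure lebesgue U"
        proof (rule measure_mono_fmeasurable)
          show "(\<Union>K\<in>D''. {l K<..<r K}) \<subseteq> U"
            using lr(4) KU D'(1) interior_subset unfolding D''_def by blast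
          show "(\<Union>K\<in>D''. {l K<..<r K}) \<in> sets lebesgue" using finD'' by auto
          show "U \<in> fmeasurable lebesgue" using Um .
        qed
        finally have "(\<Sum>i<m. r (h i) - l (h i)) < d" using sumeq1 Ud by linarith
        then have "(\<Sum>i<m. \<bar>F (r (h i)) - F (l (h i))\<bar>) < e"
          using H[rule_format, of m "\<lambda>i. l (h i)" "\<lambda>i. r (h i)"] lr hin hinj disj by auto
        then have "(\<Sum>K\<in>D''. \<bar>F (r K) - F (l K)\<bar>) < e" using sumeq2 by simp
        moreover have "(\<Sum>K\<in>D''. \<bar>F (r K) - F (l K)\<bar>) = (\<Sum>K\<in>D''. F (q K) - F (p K))"
          by (rule sum.cong) (use lr in auto)
        ultimately show ?thesis by simp
      qed
      finally show ?thesis .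
    qed
    have Tm: "(\<Union>K\<in>\<D>. I K) \<in> fmeasurable lebesgue" and Tle: "measure lebesgue (\<Union>K\<in>\<D>. I K) \<le> e"
      using fmeasurable_UN_bound[OF D(1) _ bound] measure_UN_bound[OF D(1) _ bound] Im by auto
    have "F ` N \<subseteq> (\<Union>K\<in>\<D>. I K)" using D(7) FK by blast
    then show "\<exists>T. F ` N \<subseteq> T \<and> T \<in> lmeasurable \<and> measure lebesgue T \<le> e"
      using Tm Tle by blast
    qed
  qed
qed

lemma ac_ineq:
  assumes F: "abs_cont_on_interval F a b" and ab: "a \<le> b"
    and N: "negligible N"
    and der: "\<And>x. x \<in> {a..b} - N \<Longrightarrow> (F has_real_derivative g x) (at x)"
    and int: "(\<lambda>x. \<bar>g x\<bar>) integrable_on {a..b}"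
  shows "\<bar>F b - F a\<bar> \<le> integral {a..b} (\<lambda>x. \<bar>g x\<bar>)"
proof -
  define S where "S = {a..b} - N"
  have Sm: "S \<in> sets lebesgue" unfolding S_def using negligible_imp_sets[OF N] by auto
  have derS: "(F has_real_derivative g x) (at x within S)" if "x \<in> S" for x
    using der[of x] that unfolding S_def by (simp add: has_field_derivative_at_within)
  have neg1: "negligible {x \<in> {a..b} - S. \<bar>g x\<bar> \<noteq> 0}"
    by (rule negligible_subset[OF N]) (auto simp: S_def)
  have neg2: "negligible {x \<in> S - {a..b}. \<bar>g x\<bar> \<noteq> 0}"
  proof -
    have "{x \<in> S - {a..b}. \<bar>g x\<bar> \<noteq> 0} = {}" by (auto simp: S_def)
    then show ?thesis by (metis negligible_empty)
  qed
  have intS: "(\<lambda>x. \<bar>g x\<bar>) integrable_on S"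
    using integrable_spike_set[OF int neg1 neg2] .
  have inteq: "integral S (\<lambda>x. \<bar>g x\<bar>) = integral {a..b} (\<lambda>x. \<bar>g x\<bar>)"
    using integral_spike_set[OF neg2 neg1] .
  have M: "F ` S \<in> lmeasurable" and Mle: "measure lebesgue (F ` S) \<le> integral S (\<lambda>x. \<bar>g x\<bar>)"
    using measure_image_real[OF Sm derS intS] by auto
  have negN: "negligible (F ` (N \<inter> {a..b}))"
    by (rule ac_lusinN[OF F negligible_subset[OF N]]) auto
  have contF: "continuous_on {a..b} F" using ac_cont[OF F] .
  have conn: "connected (F ` {a..b})"
    by (rule connected_continuous_image[OF contF]) simp
  have Fa: "F a \<in> F ` {a..b}" and Fb: "F b \<in> F ` {a..b}" using ab by auto
  have sub: "{min (F a) (F b) .. max (F a) (F b)} \<subseteq> F ` {a..b}"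
    by (rule connected_contains_Icc[OF conn]) (use Fa Fb in \<open>auto simp: min_def max_def\<close>)
  have sub2: "F ` {a..b} \<subseteq> F ` S \<union> F ` (N \<inter> {a..b})" unfolding S_def by blast
  have Um: "F ` S \<union> F ` (N \<inter> {a..b}) \<in> fmeasurable lebesgue"
    using M negligible_imp_measurable[OF negN] by (rule fmeasurable.Un)
  have "\<bar>F b - F a\<bar> = measure lebesgue {min (F a) (F b) .. max (F a) (F b)}"
    by (simp add: min_def max_def)
  also have "\<dots> \<le> measure lebesgue (F ` S \<union> F ` (N \<inter> {a..b}))"
    by (rule measure_mono_fmeasurable[OF _ _ Um]) (use sub sub2 in auto)
  also have "\<dots> = measure lebesgue (F ` S)"
    using M negN by (simp add: measure_Un_null_set negligible_iff_null_sets fmeasurable_def)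
  also have "\<dots> \<le> integral {a..b} (\<lambda>x. \<bar>g x\<bar>)" using Mle inteq by simp
  finally show ?thesis .
qed

lemma ae_negligible:
  assumes "AE x in lborel. P (x::real)"
  shows "negligible {x::real. \<not> P x}"
proof -
  obtain N where N: "{x \<in> space lborel. \<not> P x} \<subseteq> N" "emeasure lborel N = 0" "N \<in> sets lborel"
    using assms by (rule AE_E)
  have "N \<in> null_sets lborel" using N by auto
  then have "N \<in> null_sets lebesgue" by (rule null_sets_completionI)
  then have "negligible N" by (simp add: negligible_iff_null_sets)
  moreover have "{x::real. \<not> P x} \<subseteq> N" using N(1) by auto
  ultimately show ?thesis using negligible_subset by blast
qed

lemma ac_cont_UNIV:
  assumes "\<forall>a b. abs_cont_on_interval g a b"
  shows "continuous_on UNIV g"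
proof -
  have "isCont g x" for x
  proof -
    have "continuous_on {x-1..x+1} g" using ac_cont assms by blast
    moreover have "x \<in> interior {x-1..x+1}" by simp
    ultimately show ?thesis
      using continuous_on_interior by blast
  qed
  then show ?thesis by (simp add: continuous_at_imp_continuous_on)
qed

lemma ac_ftc_cont:
  assumes F: "abs_cont_on_interval F a b" and ab: "a \<le> b"
    and N: "negligible N"
    and der: "\<And>x. x \<in> {a..b} - N \<Longrightarrow> (F has_real_derivative g x) (at x)"
    and g: "continuous_on {a..b} g"
    and u: "u \<in> {a..b}"
  shows "F u - F a = integral {a..u} g"
proof -
  define \<Phi> where "\<Phi> x = integral {a..x} g" for x
  have dPhi: "(\<Phi> has_real_derivative g x) (at x within {a..b})" if "x \<in> {a..b}" for x
    unfolding \<Phi>_def by (rule integral_has_real_derivative[OF g that])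
  obtain M where M: "\<And>x. x \<in> {a..b} \<Longrightarrow> norm (g x) \<le> M"
    using compact_imp_bounded[OF compact_continuous_image[OF g compact_Icc]]
    unfolding bounded_iff by (metis imageI)
  have lip: "\<bar>\<Phi> x - \<Phi> y\<bar> \<le> M * \<bar>x - y\<bar>" if "x \<in> {a..b}" "y \<in> {a..b}" for x y
    using field_differentiable_bound[OF convex_real_interval(5) dPhi M that] by simp
  define H where "H x = F x - \<Phi> x" for x
  have acH: "abs_cont_on_interval H a b"
    unfolding H_def by (rule ac_diff[OF F lipschitz_ac]) (rule lip)
  have dH: "(H has_real_derivative 0) (at x)" if "x \<in> {a..u} - (N \<union> {a, b})" for x
  proof -
    have x: "x \<in> {a<..<b}" "x \<notin> N" using that u by auto
    have "(\<Phi> has_real_derivative g x) (at x)"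
      using dPhi[of x] x(1) at_within_interior[of x "{a..b}"] by auto
    moreover have "(F has_real_derivative g x) (at x)" using der[of x] x by auto
    ultimately have "(H has_real_derivative g x - g x) (at x)"
      unfolding H_def by (intro derivative_intros)
    then show ?thesis by simp
  qed
  have acH': "abs_cont_on_interval H a u" by (rule ac_sub[OF acH]) (use u in auto)
  have N': "negligible (N \<union> {a, b})" using N by simp
  have "\<bar>H u - H a\<bar> \<le> integral {a..u} (\<lambda>x. \<bar>0::real\<bar>)"
    by (rule ac_ineq[OF acH' _ N' dH]) (use u in auto)
  then have "H u = H a" by simp
  moreover have "\<Phi> a = 0" unfolding \<Phi>_def by simp
  ultimately show ?thesis unfolding H_def \<Phi>_def by simp
qed

lemma deriv_everywhere:
  assumes F: "\<forall>a b. abs_cont_on_interval F a b"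
    and ae: "AE x in lborel. (F has_real_derivative g x) (at x)"
    and g: "\<forall>a b. abs_cont_on_interval g a b"
  shows "(F has_real_derivative g x) (at x)"
proof -
  define N where "N = {x. \<not> (F has_real_derivative g x) (at x)}"
  have N: "negligible N" unfolding N_def by (rule ae_negligible[OF ae])
  define a where "a = x - 1"
  define b where "b = x + 1"
  have gc: "continuous_on {a..b} g" using continuous_on_subset[OF ac_cont_UNIV[OF g]] by blast
  have eq: "F u = F a + integral {a..u} g" if "u \<in> {a<..<b}" for u
    using ac_ftc_cont[OF spec[OF spec[OF F, of a], of b] _ N _ gc, of u] that
    unfolding N_def by (auto simp: a_def b_def)
  have "((\<lambda>u. integral {a..u} g) has_real_derivative g x) (at x within {a..b})"
    by (rule integral_has_real_derivative[OF gc]) (auto simp: a_def b_def)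
  moreover have "x \<in> interior {a..b}" by (simp add: a_def b_def)
  ultimately have "((\<lambda>u. integral {a..u} g) has_real_derivative g x) (at x)"
    using at_within_interior by metis
  then have "((\<lambda>u. F a + integral {a..u} g) has_real_derivative g x) (at x)"
    by (intro derivative_eq_intros) auto
  then show ?thesis
    by (rule has_field_derivative_transform_within_open[of _ _ _ "{a<..<b}"])
       (use eq in \<open>auto simp: a_def b_def\<close>)
qed

lemma ineq_ae:
  assumes F: "\<forall>a b. abs_cont_on_interval F a b"
    and ae: "AE x in lborel. (F has_real_derivative g x) (at x)"
    and int: "(\<lambda>x. \<bar>g x\<bar>) integrable_on {u..v}" and uv: "u \<le> v"
  shows "\<bar>F v - F u\<bar> \<le> integral {u..v} (\<lambda>x. \<bar>g x\<bar>)"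
proof -
  define N where "N = {x. \<not> (F has_real_derivative g x) (at x)}"
  have N: "negligible N" unfolding N_def by (rule ae_negligible[OF ae])
  show ?thesis
    by (rule ac_ineq[OF spec[OF spec[OF F]] uv N _ int]) (auto simp: N_def)
qed

lemma integral_pow_shift:
  assumes "0 \<le> h"
  shows "((\<lambda>x::real. (x - c) ^ l) has_integral h ^ (l+1) / (real l + 1)) {c..c+h}"
proof -
  have "((\<lambda>x::real. (x - c) ^ l) has_integral ((c + h - c) ^ (l+1) / (l+1) - (c - c) ^ (l+1) / (l+1))) {c..c+h}"
  proof (rule fundamental_theorem_of_calculus)
    show "c \<le> c + h" using assms by simp
    fix x assume "x \<in> {c..c+h}"
    have e: "(x-c)^l + real l * (x-c)^(l - Suc 0) * (x-c) = (1 + real l) * (x-c)^l"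
      by (cases l) (auto simp: algebra_simps)
    have "((\<lambda>x::real. (x - c) ^ (l+1) / (l+1)) has_real_derivative (x - c) ^ l) (at x within {c..c+h})"
      by (auto intro!: derivative_eq_intros simp: e)
    then show "((\<lambda>x::real. (x - c) ^ (l+1) / (l+1)) has_vector_derivative (x - c) ^ l) (at x within {c..c+h})"
      by (simp add: has_real_derivative_iff_has_vector_derivative)
  qed
  then show ?thesis by (simp add: add.commute)
qed

lemma cell_taylor:
  fixes f :: "nat \<Rightarrow> real \<Rightarrow> real"
  assumes h: "0 < h"
    and der: "\<And>i x. i < d \<Longrightarrow> (f (k+i) has_real_derivative f (k + Suc i) x) (at x)"
    and cont: "continuous_on {c..c+h} (f (k+d))"
    and osc: "\<And>u. u \<in> {c..c+h} \<Longrightarrow> \<bar>f (k+d) u - f (k+d) c\<bar> \<le> Wc"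
  shows "\<bar>integral {c..c+h} (f k) - h * f k c - (\<Sum>l\<in>{1..d}. f (k+l) c * h^(l+1) / fact (l+1))\<bar> \<le> h^(d+1) * Wc"
proof -
  have Wc: "0 \<le> Wc" using osc[of c] h by simp
  define P where "P u = (\<Sum>l\<le>d. f (k+l) c / fact l * (u - c)^l)" for u
  define R where "R u = f k u - P u" for u
  have Rb: "\<bar>R u\<bar> \<le> Wc * h^d" if u: "u \<in> {c..c+h}" for u
  proof (cases "u = c")
    case True
    have "P c = f k c"
      unfolding P_def by (simp add: sum.atMost_shift zero_power)
    then show ?thesis using True Wc h by (simp add: R_def)
  next
    case False
    then have cu: "c < u" "u \<le> c + h" using u by auto
    show ?thesis
    proof (cases "d = 0")
      case True
      have "P u = f k c" unfolding P_def True by simp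
      then show ?thesis using osc[OF u] True by (simp add: R_def)
    next
      case False
      have DER: "\<forall>m t. m < d \<and> c \<le> t \<and> t \<le> u \<longrightarrow> DERIV ((\<lambda>i. f (k+i)) m) t :> ((\<lambda>i. f (k+i)) (Suc m) t)"
        using der by simp
      obtain t where t: "c < t" "t < u"
        and fu: "f k u = (\<Sum>m<d. (f (k+m) c / fact m) * (u - c)^m) + (f (k+d) t / fact d) * (u - c)^d"
        using Taylor_up[of d "\<lambda>i. f (k+i)" "f k" c u c, OF _ _ DER] False cu by auto
      have Pu: "P u = (\<Sum>m<d. (f (k+m) c / fact m) * (u - c)^m) + (f (k+d) c / fact d) * (u - c)^d"
        unfolding P_def by (simp add: lessThan_Suc_atMost[symmetric])
      have Ru: "R u = (f (k+d) t - f (k+d) c) / fact d * (u - c)^d"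
        unfolding R_def fu Pu by (simp add: field_simps)
      have "\<bar>R u\<bar> = \<bar>f (k+d) t - f (k+d) c\<bar> / fact d * (u - c)^d"
        unfolding Ru using cu by (simp add: abs_mult)
      also have "\<dots> \<le> Wc / 1 * h^d"
      proof (intro mult_mono frac_le)
        show "\<bar>f (k+d) t - f (k+d) c\<bar> \<le> Wc" using osc[of t] t cu by auto
        show "(u - c)^d \<le> h^d" using cu by (intro power_mono) auto
      qed (use Wc cu in auto)
      finally show ?thesis by simp
    qed
  qed
  have contk: "continuous_on {c..c+h} (f k)"
  proof (cases "d = 0")
    case True then show ?thesis using cont by simp
  next
    case False
    then have "\<And>x. (f k has_real_derivative f (Suc k) x) (at x)" using der[of 0] by simp
    then show ?thesis
      by (meson DERIV_isCont continuous_at_imp_continuous_on)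
  qed
  have Pint: "(P has_integral (\<Sum>l\<le>d. f (k+l) c / fact l * (h^(l+1) / (real l + 1)))) {c..c+h}"
    unfolding P_def
    by (intro has_integral_sum has_integral_mult_right integral_pow_shift) (use h in auto)
  have fact_eq: "f (k+l) c / fact l * (h^(l+1) / (real l + 1)) = f (k+l) c * h^(l+1) / fact (l+1)" for l
    by (simp add: field_simps)
  have Pint': "integral {c..c+h} P = h * f k c + (\<Sum>l\<in>{1..d}. f (k+l) c * h^(l+1) / fact (l+1))"
  proof -
    have "integral {c..c+h} P = (\<Sum>l\<le>d. f (k+l) c / fact l * (h^(l+1) / (real l + 1)))"
      by (rule integral_unique[OF Pint])
    also have "\<dots> = (\<Sum>l\<le>d. f (k+l) c * h^(l+1) / fact (l+1))"
      by (rule sum.cong[OF refl]) (rule fact_eq)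
    also have "\<dots> = f (k+0) c * h^(0+1) / fact (0+1) + (\<Sum>l\<in>{1..d}. f (k+l) c * h^(l+1) / fact (l+1))"
      by (simp add: atMost_atLeast0 sum.atLeast_Suc_atMost)
    finally show ?thesis by simp
  qed
  have Pi: "P integrable_on {c..c+h}" using Pint by blast
  have fi: "f k integrable_on {c..c+h}" using contk integrable_continuous_real by blast
  have Ri: "R integrable_on {c..c+h}" unfolding R_def using fi Pi by (rule integrable_diff)
  have fR: "integral {c..c+h} (f k) = integral {c..c+h} P + integral {c..c+h} R"
  proof -
    have "integral {c..c+h} (\<lambda>u. P u + R u) = integral {c..c+h} P + integral {c..c+h} R"
      by (rule integral_add[OF Pi Ri])
    moreover have "(\<lambda>u. P u + R u) = f k" by (auto simp: R_def)
    ultimately show ?thesis by simp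
  qed
  have "\<bar>integral {c..c+h} R\<bar> \<le> integral {c..c+h} (\<lambda>_. Wc * h^d)"
  proof -
    have ci: "(\<lambda>_. Wc * h^d) integrable_on {c..c+h}" by (rule integrable_const_ivl)
    show ?thesis using integral_norm_bound_integral[OF Ri ci] Rb by (simp add: real_norm_def)
  qed
  also have "\<dots> = h^(d+1) * Wc" using h by simp
  finally have "\<bar>integral {c..c+h} R\<bar> \<le> h^(d+1) * Wc" .
  then show ?thesis using fR Pint' by simp
qed

definition Eq :: "(real \<Rightarrow> real) \<Rightarrow> real \<Rightarrow> real \<Rightarrow> nat \<Rightarrow> real" where
  "Eq g a h n = integral {a..a + real n * h} g - h * (\<Sum>j<n. g (a + real j * h))"

lemma integral_cells:
  fixes g :: "real \<Rightarrow> real"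
  assumes "0 \<le> h" "g integrable_on {a..a + real n * h}"
  shows "integral {a..a + real n * h} g = (\<Sum>j<n. integral {a + real j * h..a + real j * h + h} g)"
  using assms(2)
proof (induction n)
  case 0
  then show ?case by simp
next
  case (Suc n)
  have "real n * h \<le> real (Suc n) * h" using assms(1) by (intro mult_right_mono) auto
  then have sub: "{a..a + real n * h} \<subseteq> {a..a + real (Suc n) * h}" by auto
  have i1: "g integrable_on {a..a + real n * h}"
    using integrable_subinterval_real[OF Suc.prems sub] .
  have e: "a + real (Suc n) * h = a + real n * h + h" by (simp add: algebra_simps)
  have comb: "integral {a..a + real n * h} g + integral {a + real n * h..a + real n * h + h} g
        = integral {a..a + real n * h + h} g"
  proof (rule Henstock_Kurzweil_Integration.integral_combine)
    show "g integrable_on {a..a + real n * h + h}" using Suc.prems unfolding e .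
  qed (use assms(1) in auto)
  have "integral {a..a + real (Suc n) * h} g = integral {a..a + real n * h + h} g" by (simp only: e)
  also have "\<dots> = integral {a..a + real n * h} g + integral {a + real n * h..a + real n * h + h} g"
    using comb by simp
  also have "\<dots> = (\<Sum>j<n. integral {a + real j * h..a + real j * h + h} g) + integral {a + real n * h..a + real n * h + h} g"
    using Suc.IH[OF i1] by simp
  finally show ?case by simp
qed

fun Acon :: "nat \<Rightarrow> real" where
  "Acon 0 = 1"
| "Acon (Suc d) = 1 + real (Suc d) * (1 + Acon d)"

lemma Acon_pos: "Acon d \<ge> 1"
  by (induction d) auto

lemma Acon_mono: "d' \<le> d \<Longrightarrow> Acon d' \<le> Acon d"
proof (induction d)
  case 0 then show ?case by simp
next
  case (Suc d)
  show ?case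
  proof (cases "d' = Suc d")
    case True then show ?thesis by simp
  next
    case False
    then have "Acon d' \<le> Acon d" using Suc by simp
    moreover have "Acon d \<le> Acon (Suc d)"
    proof -
      have "Acon d \<le> 1 * (1 + Acon d)" by simp
      also have "\<dots> \<le> real (Suc d) * (1 + Acon d)" using Acon_pos[of d] by (intro mult_right_mono) auto
      finally show ?thesis by simp
    qed
    ultimately show ?thesis by linarith
  qed
qed

lemma ftc_everywhere:
  assumes "\<And>x. (F has_real_derivative g x) (at x)" "a \<le> b"
  shows "integral {a..b} g = F b - F a"
proof -
  have "(g has_integral (F b - F a)) {a..b}"
    by (rule fundamental_theorem_of_calculus[OF assms(2)])
       (use assms(1) in \<open>auto simp: has_real_derivative_iff_has_vector_derivative[symmetric] intro: has_field_derivative_at_within\<close>)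
  then show ?thesis by (rule integral_unique)
qed

lemma integral_le_sub:
  fixes w :: "real \<Rightarrow> real"
  assumes wint: "w integrable_on {a..b}" and wpos: "\<And>x. 0 \<le> w x" and "a \<le> u" "u \<le> v" "v \<le> b"
  shows "integral {u..v} w \<le> integral {a..b} w"
proof -
  have i1: "w integrable_on {a..v}" by (rule integrable_subinterval_real[OF wint]) (use assms in auto)
  have "integral {a..u} w + integral {u..v} w = integral {a..v} w"
    by (rule Henstock_Kurzweil_Integration.integral_combine) (use assms i1 in auto)
  moreover have "integral {a..v} w + integral {v..b} w = integral {a..b} w"
    by (rule Henstock_Kurzweil_Integration.integral_combine) (use assms in auto)
  moreover have "integral {a..u} w \<ge> 0" by (rule integral_nonneg) (use integrable_subinterval_real[OF wint] assms wpos in auto)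
  moreover have "integral {v..b} w \<ge> 0" by (rule integral_nonneg) (use integrable_subinterval_real[OF wint] assms wpos in auto)
  ultimately show ?thesis by linarith
qed

lemma E_step:
  fixes f :: "nat \<Rightarrow> real \<Rightarrow> real" and w :: "real \<Rightarrow> real"
  assumes h: "0 < h"
    and der: "\<And>i x. i < m \<Longrightarrow> (f i has_real_derivative f (Suc i) x) (at x)"
    and contm: "continuous_on UNIV (f m)"
    and osc: "\<And>u v. a \<le> u \<Longrightarrow> u \<le> v \<Longrightarrow> v \<le> a + real n * h \<Longrightarrow> \<bar>f m v - f m u\<bar> \<le> integral {u..v} w"
    and wint: "w integrable_on {a..a + real n * h}"
    and wpos: "\<And>x. 0 \<le> w x"
    and bd: "\<And>l. l < m \<Longrightarrow> \<bar>f l (a + real n * h) - f l a\<bar> \<le> \<beta>"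
    and k: "k \<le> m"
  shows "\<bar>Eq (f k) a h n\<bar> \<le> (\<Sum>l\<in>{1..m-k}. h^l * (\<beta> + \<bar>Eq (f (k+l)) a h n\<bar>))
            + h^(m-k+1) * integral {a..a + real n * h} w"
proof -
  define d where "d = m - k"
  have kd: "k + d = m" using k unfolding d_def by simp
  define x where "x j = a + real j * h" for j :: nat
  define b where "b = a + real n * h"
  define W where "W j = integral {x j..x j + h} w" for j
  define J where "J = integral {a..b} w"
  have ab: "a \<le> b" unfolding b_def using h by simp
  have contf: "continuous_on UNIV (f i)" if "i \<le> m" for i
  proof (cases "i = m")
    case True then show ?thesis using contm by simp
  next
    case False
    then have "i < m" using that by simp
    then show ?thesis using der DERIV_isCont continuous_at_imp_continuous_on by blast
  qed
  have intf: "f i integrable_on {u..v}" if "i \<le> m" for i u v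
    using contf[OF that] by (meson continuous_on_subset integrable_continuous_real subset_UNIV)
  have xj: "a \<le> x j" "x j + h \<le> b" if "j < n" for j
  proof -
    show "a \<le> x j" unfolding x_def using h by simp
    have "real j * h + h = real (Suc j) * h" by (simp add: algebra_simps)
    also have "\<dots> \<le> real n * h" using that h by (intro mult_right_mono) auto
    finally show "x j + h \<le> b" unfolding x_def b_def by simp
  qed
  define C where "C j = (\<Sum>l\<in>{1..d}. f (k+l) (x j) * h^(l+1) / fact (l+1))" for j
  have cell: "\<bar>integral {x j..x j + h} (f k) - h * f k (x j) - C j\<bar> \<le> h^(d+1) * W j" if j: "j < n" for j
    unfolding C_def
  proof (rule cell_taylor[OF h])
    fix i y assume "i < d"
    then have "k + i < m" using kd by simp
    then show "(f (k+i) has_real_derivative f (k + Suc i) y) (at y)" using der[of "k+i" y] by simp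
  next
    show "continuous_on {x j..x j + h} (f (k+d))" using contm kd continuous_on_subset by blast
  next
    fix u assume u: "u \<in> {x j..x j + h}"
    have "\<bar>f m u - f m (x j)\<bar> \<le> integral {x j..u} w"
      by (rule osc) (use u xj[OF j] b_def in auto)
    also have "\<dots> \<le> W j" unfolding W_def
      by (rule integral_le_sub[OF integrable_subinterval_real[OF wint] wpos])
         (use u xj[OF j] b_def in auto)
    finally show "\<bar>f (k+d) u - f (k+d) (x j)\<bar> \<le> W j" using kd by simp
  qed
  have Eeq: "Eq (f k) a h n = (\<Sum>j<n. integral {x j..x j + h} (f k) - h * f k (x j))"
    unfolding Eq_def using integral_cells[of h "f k" a n] intf[OF k] h
    by (simp add: x_def sum_subtractf sum_distrib_left)
  have Jeq: "J = (\<Sum>j<n. W j)"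
    unfolding J_def W_def b_def x_def using integral_cells[of h w a n] wint h by simp
  have sumC: "(\<Sum>j<n. C j) = (\<Sum>l\<in>{1..d}. h^(l+1) / fact (l+1) * (\<Sum>j<n. f (k+l) (x j)))"
  proof -
    have "(\<Sum>j<n. C j) = (\<Sum>l\<in>{1..d}. \<Sum>j<n. f (k+l) (x j) * h^(l+1) / fact (l+1))"
      unfolding C_def by (rule sum.swap)
    also have "\<dots> = (\<Sum>l\<in>{1..d}. h^(l+1) / fact (l+1) * (\<Sum>j<n. f (k+l) (x j)))"
    proof (rule sum.cong[OF refl])
      fix l
      have "(\<Sum>j<n. f (k+l) (x j) * h^(l+1) / fact (l+1)) = (\<Sum>j<n. h^(l+1) / fact (l+1) * f (k+l) (x j))"
        by (rule sum.cong[OF refl]) simp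
      also have "\<dots> = h^(l+1) / fact (l+1) * (\<Sum>j<n. f (k+l) (x j))"
        by (rule sum_distrib_left[symmetric])
      finally show "(\<Sum>j<n. f (k+l) (x j) * h^(l+1) / fact (l+1)) = h^(l+1) / fact (l+1) * (\<Sum>j<n. f (k+l) (x j))" .
    qed
    finally show ?thesis .
  qed
  have diffb: "\<bar>Eq (f k) a h n - (\<Sum>j<n. C j)\<bar> \<le> h^(d+1) * J"
  proof -
    have "\<bar>Eq (f k) a h n - (\<Sum>j<n. C j)\<bar> = \<bar>\<Sum>j<n. integral {x j..x j + h} (f k) - h * f k (x j) - C j\<bar>"
      unfolding Eeq by (simp add: sum_subtractf)
    also have "\<dots> \<le> (\<Sum>j<n. \<bar>integral {x j..x j + h} (f k) - h * f k (x j) - C j\<bar>)"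
      by (rule sum_abs)
    also have "\<dots> \<le> (\<Sum>j<n. h^(d+1) * W j)"
      by (rule sum_mono) (use cell in auto)
    also have "\<dots> = h^(d+1) * J" unfolding Jeq by (simp add: sum_distrib_left)
    finally show ?thesis .
  qed
  have termb: "\<bar>h^(l+1) / fact (l+1) * (\<Sum>j<n. f (k+l) (x j))\<bar> \<le> h^l * (\<beta> + \<bar>Eq (f (k+l)) a h n\<bar>)"
    if l: "l \<in> {1..d}" for l
  proof -
    have lm: "k + l - 1 < m" "Suc (k + l - 1) = k + l" using l kd by auto
    have I: "integral {a..b} (f (k+l)) = f (k+l-1) b - f (k+l-1) a"
      using ftc_everywhere[of "f (k+l-1)" "f (k+l)", OF _ ab] der[OF lm(1)] lm(2) by simp
    have Ib: "\<bar>integral {a..b} (f (k+l))\<bar> \<le> \<beta>" using I bd[OF lm(1)] unfolding b_def by simp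
    have hs: "h * (\<Sum>j<n. f (k+l) (x j)) = integral {a..b} (f (k+l)) - Eq (f (k+l)) a h n"
      unfolding Eq_def b_def x_def by simp
    have "h^(l+1) / fact (l+1) * (\<Sum>j<n. f (k+l) (x j)) = h^l / fact (l+1) * (h * (\<Sum>j<n. f (k+l) (x j)))"
      by (simp add: field_simps)
    also have "\<dots> = h^l / fact (l+1) * (integral {a..b} (f (k+l)) - Eq (f (k+l)) a h n)"
      unfolding hs ..
    finally have eq: "h^(l+1) / fact (l+1) * (\<Sum>j<n. f (k+l) (x j)) = h^l / fact (l+1) * (integral {a..b} (f (k+l)) - Eq (f (k+l)) a h n)" .
    have b1: "\<bar>integral {a..b} (f (k+l)) - Eq (f (k+l)) a h n\<bar> \<le> \<beta> + \<bar>Eq (f (k+l)) a h n\<bar>"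
      using Ib by linarith
    have f1: "h^l / fact (l+1) \<le> h^l"
    proof -
      have "(1::real) \<le> fact (l+1)" by (rule fact_ge_1)
      then show ?thesis using h by (simp add: divide_le_eq mult_le_cancel_left1 zero_less_power[of h] less_imp_le)
    qed
    have "\<bar>h^l / fact (l+1) * (integral {a..b} (f (k+l)) - Eq (f (k+l)) a h n)\<bar>
          = h^l / fact (l+1) * \<bar>integral {a..b} (f (k+l)) - Eq (f (k+l)) a h n\<bar>"
      using h by (simp add: abs_mult)
    also have "\<dots> \<le> h^l * (\<beta> + \<bar>Eq (f (k+l)) a h n\<bar>)"
      by (rule mult_mono[OF f1 b1]) (use h in auto)
    finally show ?thesis unfolding eq .
  qed
  have "\<bar>Eq (f k) a h n\<bar> \<le> \<bar>\<Sum>j<n. C j\<bar> + h^(d+1) * J" using diffb by linarith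
  also have "\<bar>\<Sum>j<n. C j\<bar> \<le> (\<Sum>l\<in>{1..d}. h^l * (\<beta> + \<bar>Eq (f (k+l)) a h n\<bar>))"
  proof -
    have "\<bar>\<Sum>j<n. C j\<bar> \<le> (\<Sum>l\<in>{1..d}. \<bar>h^(l+1) / fact (l+1) * (\<Sum>j<n. f (k+l) (x j))\<bar>)"
      unfolding sumC by (rule sum_abs)
    also have "\<dots> \<le> (\<Sum>l\<in>{1..d}. h^l * (\<beta> + \<bar>Eq (f (k+l)) a h n\<bar>))"
      by (rule sum_mono) (rule termb)
    finally show ?thesis .
  qed
  finally show ?thesis unfolding d_def J_def b_def by simp
qed

definition Pb :: "real \<Rightarrow> real \<Rightarrow> real \<Rightarrow> nat \<Rightarrow> real" where
  "Pb h J \<beta> d = h^(d+1) * J + \<beta> * (\<Sum>l\<in>{1..d}. h^l)"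

lemma Pb_nonneg: "0 \<le> h \<Longrightarrow> 0 \<le> J \<Longrightarrow> 0 \<le> \<beta> \<Longrightarrow> 0 \<le> Pb h J \<beta> d"
  unfolding Pb_def by (intro add_nonneg_nonneg mult_nonneg_nonneg sum_nonneg) auto

lemma Pb_term1:
  assumes "0 \<le> h" "0 \<le> J" "0 \<le> \<beta>" "l \<in> {1..d}"
  shows "h^l * \<beta> \<le> Pb h J \<beta> d"
proof -
  have "h^l \<le> (\<Sum>i\<in>{1..d}. h^i)"
    by (rule member_le_sum) (use assms in auto)
  then have "h^l * \<beta> \<le> \<beta> * (\<Sum>i\<in>{1..d}. h^i)" using assms(3) by (simp add: mult.commute mult_left_mono)
  moreover have "0 \<le> h^(d+1) * J" using assms by simp
  ultimately show ?thesis unfolding Pb_def by linarith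
qed

lemma Pb_term2:
  assumes "0 \<le> h" "0 \<le> J" "0 \<le> \<beta>" "l \<le> d"
  shows "h^l * Pb h J \<beta> (d - l) \<le> Pb h J \<beta> d"
proof -
  have e1: "h^l * (h^(d-l+1) * J) = h^(d+1) * J"
    using assms(4) by (simp add: power_add[symmetric])
  have "h^l * (\<Sum>i\<in>{1..d-l}. h^i) = (\<Sum>i\<in>{1..d-l}. h^(i+l))"
    by (simp add: sum_distrib_left power_add mult.commute)
  also have "\<dots> = (\<Sum>i\<in>{1+l..d-l+l}. h^i)"
    by (rule sum.shift_bounds_cl_nat_ivl[symmetric])
  also have "\<dots> \<le> (\<Sum>i\<in>{1..d}. h^i)"
    by (rule sum_mono2) (use assms in auto)
  finally have "h^l * (\<Sum>i\<in>{1..d-l}. h^i) \<le> (\<Sum>i\<in>{1..d}. h^i)" .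
  then have "\<beta> * (h^l * (\<Sum>i\<in>{1..d-l}. h^i)) \<le> \<beta> * (\<Sum>i\<in>{1..d}. h^i)"
    using assms(3) by (intro mult_left_mono)
  moreover have "h^l * Pb h J \<beta> (d - l) = h^l * (h^(d-l+1) * J) + \<beta> * (h^l * (\<Sum>i\<in>{1..d-l}. h^i))"
    unfolding Pb_def by (simp add: algebra_simps)
  ultimately show ?thesis unfolding Pb_def e1 by linarith
qed

lemma E_bound:
  fixes f :: "nat \<Rightarrow> real \<Rightarrow> real" and w :: "real \<Rightarrow> real"
  assumes h: "0 < h"
    and der: "\<And>i x. i < m \<Longrightarrow> (f i has_real_derivative f (Suc i) x) (at x)"
    and contm: "continuous_on UNIV (f m)"
    and osc: "\<And>u v. a \<le> u \<Longrightarrow> u \<le> v \<Longrightarrow> v \<le> a + real n * h \<Longrightarrow> \<bar>f m v - f m u\<bar> \<le> integral {u..v} w"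
    and wint: "w integrable_on {a..a + real n * h}"
    and wpos: "\<And>x. 0 \<le> w x"
    and bd: "\<And>l. l < m \<Longrightarrow> \<bar>f l (a + real n * h) - f l a\<bar> \<le> \<beta>"
    and \<beta>: "0 \<le> \<beta>"
  shows "k \<le> m \<Longrightarrow> \<bar>Eq (f k) a h n\<bar> \<le> Acon (m-k) * Pb h (integral {a..a + real n * h} w) \<beta> (m-k)"
proof -
  define J where "J = integral {a..a + real n * h} w"
  have J: "0 \<le> J" unfolding J_def by (rule integral_nonneg[OF wint]) (use wpos in auto)
  have main: "\<forall>k. k + d = m \<longrightarrow> \<bar>Eq (f k) a h n\<bar> \<le> Acon d * Pb h J \<beta> d" for d
  proof (induction d rule: less_induct)
    case (less d)
    show ?case
    proof (intro allI impI)
      fix k assume kd: "k + d = m"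
      have step: "\<bar>Eq (f k) a h n\<bar> \<le> (\<Sum>l\<in>{1..d}. h^l * (\<beta> + \<bar>Eq (f (k+l)) a h n\<bar>)) + h^(d+1) * J"
      proof -
        have md: "m - k = d" using kd by simp
        have "k \<le> m" using kd by simp
        from E_step[OF h der contm osc wint wpos bd this] show ?thesis unfolding md J_def .
      qed
      have hJ: "h^(d+1) * J \<le> Pb h J \<beta> d"
        unfolding Pb_def using \<beta> h by (simp add: sum_nonneg)
      have PbN: "0 \<le> Pb h J \<beta> d" using Pb_nonneg h J \<beta> by simp
      show "\<bar>Eq (f k) a h n\<bar> \<le> Acon d * Pb h J \<beta> d"
      proof (cases d)
        case 0
        then have "\<bar>Eq (f k) a h n\<bar> \<le> h^(d+1) * J" using step by simp
        then show ?thesis using hJ 0 by simp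
      next
        case (Suc d')
        have tl: "h^l * (\<beta> + \<bar>Eq (f (k+l)) a h n\<bar>) \<le> (1 + Acon d') * Pb h J \<beta> d"
          if l: "l \<in> {1..d}" for l
        proof -
          have IH: "\<bar>Eq (f (k+l)) a h n\<bar> \<le> Acon (d-l) * Pb h J \<beta> (d-l)"
            using less.IH[of "d-l"] l kd by auto
          have A: "Acon (d-l) \<le> Acon d'" using l Suc by (intro Acon_mono) auto
          have "h^l * \<bar>Eq (f (k+l)) a h n\<bar> \<le> h^l * (Acon (d-l) * Pb h J \<beta> (d-l))"
            using IH h by (intro mult_left_mono) auto
          also have "\<dots> = Acon (d-l) * (h^l * Pb h J \<beta> (d-l))" by simp
          also have "\<dots> \<le> Acon (d-l) * Pb h J \<beta> d"
            using Pb_term2[of h J \<beta> l d] h J \<beta> l Acon_pos[of "d-l"] by (intro mult_left_mono) auto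
          also have "\<dots> \<le> Acon d' * Pb h J \<beta> d" using A PbN by (rule mult_right_mono)
          finally have t2: "h^l * \<bar>Eq (f (k+l)) a h n\<bar> \<le> Acon d' * Pb h J \<beta> d" .
          have t1: "h^l * \<beta> \<le> Pb h J \<beta> d" using Pb_term1[of h J \<beta> l d] h J \<beta> l by auto
          show ?thesis using t1 t2 by (simp add: algebra_simps)
        qed
        have "(\<Sum>l\<in>{1..d}. h^l * (\<beta> + \<bar>Eq (f (k+l)) a h n\<bar>)) \<le> (\<Sum>l\<in>{1..d}. (1 + Acon d') * Pb h J \<beta> d)"
          by (rule sum_mono) (rule tl)
        also have "\<dots> = real d * ((1 + Acon d') * Pb h J \<beta> d)" by simp
        finally have "\<bar>Eq (f k) a h n\<bar> \<le> real d * ((1 + Acon d') * Pb h J \<beta> d) + Pb h J \<beta> d"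
          using step hJ by linarith
        also have "\<dots> = Acon d * Pb h J \<beta> d" using Suc by (simp add: algebra_simps)
        finally show ?thesis .
      qed
    qed
  qed
  assume "k \<le> m"
  then show ?thesis using main[of "m-k"] unfolding J_def by simp
qed

lemma tail_piece:
  fixes g :: "real \<Rightarrow> real"
  assumes cont: "continuous_on UNIV g" and c: "0 < c"
    and bnd: "\<And>x. T \<le> x \<Longrightarrow> \<bar>g x\<bar> \<le> K * exp (-c * (x - T))"
  shows "g absolutely_integrable_on {T..}" "\<bar>integral {T..} g\<bar> \<le> K / c"
proof -
  define m where "m x = (K * exp (c * T)) * exp (-c * x)" for x
  have meq: "m x = K * exp (-c * (x - T))" for x
    unfolding m_def by (simp add: algebra_simps flip: exp_add)
  have mint: "(m has_integral (K * exp (c * T)) * (exp (-c * T) / c)) {T..}"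
    unfolding m_def by (intro has_integral_mult_right has_integral_exp_minus_to_infinity c)
  have mval: "(K * exp (c * T)) * (exp (-c * T) / c) = K / c"
    by (simp add: field_simps flip: exp_add)
  have mi: "m integrable_on {T..}" using mint by blast
  have meas: "g \<in> borel_measurable (lebesgue_on {T..})"
    by (rule continuous_imp_measurable_on_sets_lebesgue) (use cont continuous_on_subset in auto)
  have le: "\<And>x. x \<in> {T..} \<Longrightarrow> norm (g x) \<le> m x" using bnd meq by auto
  have gi: "g integrable_on {T..}"
    by (rule measurable_bounded_by_integrable_imp_integrable[OF meas mi le]) auto
  show "g absolutely_integrable_on {T..}"
    by (rule absolutely_integrable_integrable_bound[OF le gi mi])
  have "norm (integral {T..} g) \<le> integral {T..} m"
    by (rule integral_norm_bound_integral[OF gi mi le])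
  also have "\<dots> = K / c" using integral_unique[OF mint] mval by simp
  finally show "\<bar>integral {T..} g\<bar> \<le> K / c" by simp
qed

lemma tail_total:
  fixes g :: "real \<Rightarrow> real"
  assumes cont: "continuous_on UNIV g" and c: "0 < c" and T: "0 \<le> T"
    and bnd: "\<And>x. T \<le> \<bar>x\<bar> \<Longrightarrow> \<bar>g x\<bar> \<le> K * exp (-c * (\<bar>x\<bar> - T))"
  shows "integrable lborel g" "\<bar>(LINT x|lborel. g x) - integral {-T..T} g\<bar> \<le> 2 * K / c"
proof -
  have bR: "\<bar>g x\<bar> \<le> K * exp (-c * (x - T))" if "T \<le> x" for x
    using bnd[of x] that T by simp
  have bL: "\<bar>g (-x)\<bar> \<le> K * exp (-c * (x - T))" if "T \<le> x" for x
    using bnd[of "-x"] that T by simp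
  have R1: "g absolutely_integrable_on {T..}" and R2: "\<bar>integral {T..} g\<bar> \<le> K / c"
    using tail_piece[OF cont c bR] by auto
  have contm: "continuous_on UNIV (\<lambda>x. g (-x))"
    by (intro continuous_on_compose2[OF cont]) (auto intro: continuous_intros)
  have L1: "(\<lambda>x. g (-x)) absolutely_integrable_on {T..}" and L2: "\<bar>integral {T..} (\<lambda>x. g (-x))\<bar> \<le> K / c"
    using tail_piece[OF contm c bL] by auto
  have refl: "(\<lambda>x. g (-x)) absolutely_integrable_on {T..} \<and> integral {T..} (\<lambda>x. g (-x)) = integral {T..} (\<lambda>x. g (-x))
      \<longleftrightarrow> g absolutely_integrable_on {..-T} \<and> integral {..-T} g = integral {T..} (\<lambda>x. g (-x))"
    by (rule has_absolute_integral_reflect_real) (auto simp: image_def intro: bexI[of _ "- _"])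
  have L3: "g absolutely_integrable_on {..-T}" and L4: "integral {..-T} g = integral {T..} (\<lambda>x. g (-x))"
    using refl L1 by auto
  have M1: "g absolutely_integrable_on {-T..T}"
    using cont by (intro absolutely_integrable_continuous_real) (auto intro: continuous_on_subset)
  have hR: "(g has_integral integral {T..} g) {T..}"
    using R1 set_lebesgue_integral_eq_integral(1) by (blast intro: integrable_integral)
  have hL: "(g has_integral integral {..-T} g) {..-T}"
    using L3 set_lebesgue_integral_eq_integral(1) by (blast intro: integrable_integral)
  have hM: "(g has_integral integral {-T..T} g) {-T..T}"
    using M1 set_lebesgue_integral_eq_integral(1) by (blast intro: integrable_integral)
  have h1: "(g has_integral (integral {..-T} g + integral {-T..T} g)) ({..-T} \<union> {-T..T})"
    by (rule has_integral_Un[OF hL hM]) (rule negligible_subset[of "{-T}"], auto)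
  have h2: "(g has_integral ((integral {..-T} g + integral {-T..T} g) + integral {T..} g)) (({..-T} \<union> {-T..T}) \<union> {T..})"
    by (rule has_integral_Un[OF h1 hR]) (rule negligible_subset[of "{T}"], use T in auto)
  have U: "({..-T} \<union> {-T..T}) \<union> {T..} = (UNIV :: real set)" by auto
  have hU: "(g has_integral (integral {..-T} g + integral {-T..T} g + integral {T..} g)) UNIV"
    using h2 unfolding U .
  have absU: "g absolutely_integrable_on (({..-T} \<union> {-T..T}) \<union> {T..})"
    by (intro set_integrable_Un L3 M1 R1) auto
  then have "integrable lebesgue g" unfolding U set_integrable_def by simp
  moreover have "g \<in> borel_measurable borel" using cont by (simp add: borel_measurable_continuous_onI)
  ultimately show il: "integrable lborel g"
    using integrable_completion[of g lborel] by simp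
  have "(LINT x|lborel. g x) = integral UNIV g" using integral_lborel[OF il] by simp
  also have "\<dots> = integral {..-T} g + integral {-T..T} g + integral {T..} g" using integral_unique[OF hU] .
  finally have "(LINT x|lborel. g x) - integral {-T..T} g = integral {..-T} g + integral {T..} g" by simp
  then show "\<bar>(LINT x|lborel. g x) - integral {-T..T} g\<bar> \<le> 2 * K / c"
    using L2 L4 R2 by simp
qed

lemma sq_abs_integrable:
  fixes g :: "real \<Rightarrow> real"
  assumes gm: "g \<in> borel_measurable lborel" and gi: "integrable lborel (\<lambda>x. (g x)\<^sup>2)"
  shows "(\<lambda>x. \<bar>g x\<bar>) integrable_on {u..v}" "(\<lambda>x. (g x)\<^sup>2) integrable_on {u..v}"
    "(LINT x:{u..v}|lborel. (g x)\<^sup>2) = integral {u..v} (\<lambda>x. (g x)\<^sup>2)"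
proof -
  have s2: "set_integrable lborel {u..v} (\<lambda>x. (g x)\<^sup>2)"
    unfolding set_integrable_def by (rule integrable_mult_indicator) (use gi in auto)
  then show "(\<lambda>x. (g x)\<^sup>2) integrable_on {u..v}" "(LINT x:{u..v}|lborel. (g x)\<^sup>2) = integral {u..v} (\<lambda>x. (g x)\<^sup>2)"
    using set_borel_integral_eq_integral by auto
  have s1: "set_integrable lborel {u..v} (\<lambda>x. 1::real)"
  proof -
    have "integrable lborel (indicat_real {u..v})"
    proof (rule integrable_real_indicator)
      show "emeasure lborel {u..v} < \<infinity>"
      proof (cases "u \<le> v")
        case True then show ?thesis by simp
      next
        case False then have "{u..v} = {}" by auto
        then show ?thesis by simp
      qed
    qed simp
    then show ?thesis unfolding set_integrable_def by simp
  qed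
  have s12: "set_integrable lborel {u..v} (\<lambda>x. 1 + (g x)\<^sup>2)"
  proof -
    have "integrable lborel (\<lambda>x. indicator {u..v} x *\<^sub>R (1::real) + indicator {u..v} x *\<^sub>R (g x)\<^sup>2)"
      using s1 s2 unfolding set_integrable_def by (rule Bochner_Integration.integrable_add)
    then show ?thesis unfolding set_integrable_def by (simp only: scaleR_add_right)
  qed
  have "set_integrable lborel {u..v} (\<lambda>x. \<bar>g x\<bar>)"
    unfolding set_integrable_def
  proof (rule Bochner_Integration.integrable_bound)
    show "integrable lborel (\<lambda>x. indicator {u..v} x *\<^sub>R (1 + (g x)\<^sup>2))"
      using s12 unfolding set_integrable_def .
    show "(\<lambda>x. indicator {u..v} x *\<^sub>R \<bar>g x\<bar>) \<in> borel_measurable lborel"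
      using gm by measurable
    show "AE x in lborel. norm (indicator {u..v} x *\<^sub>R \<bar>g x\<bar>) \<le> norm (indicator {u..v} x *\<^sub>R (1 + (g x)\<^sup>2))"
    proof (rule AE_I2)
      fix x
      have "\<bar>g x\<bar> \<le> 1 + (g x)\<^sup>2"
      proof (cases "\<bar>g x\<bar> \<le> 1")
        case True then show ?thesis by (simp add: add_increasing2)
      next
        case False
        then have "\<bar>g x\<bar> * 1 \<le> \<bar>g x\<bar> * \<bar>g x\<bar>" by (intro mult_left_mono) auto
        then have "\<bar>g x\<bar> \<le> \<bar>g x\<bar> * \<bar>g x\<bar>" by simp
        then show ?thesis by (simp add: power2_eq_square abs_mult_self_eq)
      qed
      then show "norm (indicator {u..v} x *\<^sub>R \<bar>g x\<bar>) \<le> norm (indicator {u..v} x *\<^sub>R (1 + (g x)\<^sup>2))"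
        by (auto simp: indicator_def)
    qed
  qed
  then show "(\<lambda>x. \<bar>g x\<bar>) integrable_on {u..v}"
    using set_borel_integral_eq_integral by auto
qed

lemma amgm_int:
  fixes g :: "real \<Rightarrow> real"
  assumes i2: "(\<lambda>x. (g x)\<^sup>2) integrable_on {a..b}" and i1: "(\<lambda>x. \<bar>g x\<bar>) integrable_on {a..b}"
    and ab: "a \<le> b" and B: "integral {a..b} (\<lambda>x. (g x)\<^sup>2) \<le> S\<^sup>2" and S: "0 \<le> S"
  shows "integral {a..b} (\<lambda>x. \<bar>g x\<bar>) \<le> sqrt (b - a) * S"
proof -
  define J where "J = integral {a..b} (\<lambda>x. \<bar>g x\<bar>)"
  have J0: "0 \<le> J" unfolding J_def by (rule integral_nonneg[OF i1]) auto
  have gen: "J \<le> (l * S\<^sup>2 + (b - a) / l) / 2" if l: "0 < l" for l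
  proof -
    have pt: "\<bar>g x\<bar> \<le> (l * (g x)\<^sup>2 + 1 / l) / 2" for x
    proof -
      have "0 \<le> (sqrt l * \<bar>g x\<bar> - 1 / sqrt l)\<^sup>2" by simp
      also have "\<dots> = (sqrt l)\<^sup>2 * \<bar>g x\<bar>\<^sup>2 - 2 * (sqrt l * \<bar>g x\<bar>) * (1 / sqrt l) + (1 / sqrt l)\<^sup>2"
        by (simp add: power2_diff power_mult_distrib)
      also have "\<dots> = l * (g x)\<^sup>2 + 1 / l - 2 * \<bar>g x\<bar>"
        using l by (simp add: power_divide)
      finally show ?thesis by simp
    qed
    have ic: "(\<lambda>x. (l * (g x)\<^sup>2 + 1 / l) / 2) integrable_on {a..b}"
      using integrable_add[OF integrable_cmul[OF i2, of l] integrable_const_ivl[of "1/l" a b]] by simp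
    have "J \<le> integral {a..b} (\<lambda>x. (l * (g x)\<^sup>2 + 1 / l) / 2)"
      unfolding J_def by (rule integral_le[OF i1 ic]) (use pt in auto)
    also have "\<dots> = (l * integral {a..b} (\<lambda>x. (g x)\<^sup>2) + (b - a) / l) / 2"
    proof -
      have "integral {a..b} (\<lambda>x. (l * (g x)\<^sup>2 + 1 / l) / 2) = integral {a..b} (\<lambda>x. l * (g x)\<^sup>2 + 1 / l) / 2"
        by (rule integral_divide)
      also have "integral {a..b} (\<lambda>x. l * (g x)\<^sup>2 + 1 / l) = l * integral {a..b} (\<lambda>x. (g x)\<^sup>2) + (b - a) / l"
        using integral_add[OF integrable_cmul[OF i2, of l] integrable_const_ivl[of "1/l" a b]] ab
        by (simp add: integral_mult_right)
      finally show ?thesis by simp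
    qed
    also have "\<dots> \<le> (l * S\<^sup>2 + (b - a) / l) / 2"
      using B l by (simp add: mult_left_mono)
    finally show ?thesis .
  qed
  show ?thesis
  proof (cases "S = 0")
    case True
    show ?thesis
    proof (rule ccontr)
      assume "\<not> ?thesis"
      then have Jp: "0 < J" using True unfolding J_def by simp
      define l where "l = (b - a + 1) / J"
      have l: "0 < l" unfolding l_def using Jp ab by simp
      have "J \<le> ((b - a) / l) / 2" using gen[OF l] True by simp
      also have "\<dots> = (b - a) * J / (2 * (b - a + 1))" unfolding l_def using Jp ab by (simp add: field_simps)
      also have "\<dots> < J"
      proof -
        have "(b - a) * J < 2 * (b - a + 1) * J" using Jp ab by (intro mult_strict_right_mono) auto
        then show ?thesis using ab by (simp add: divide_less_eq mult.commute)
      qed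
      finally show False by simp
    qed
  next
    case False
    then have Sp: "0 < S" using S by simp
    show ?thesis
    proof (cases "a = b")
      case True
      then show ?thesis using J0 unfolding J_def by simp
    next
      case False
      then have ba: "0 < b - a" using ab by simp
      define l where "l = sqrt (b - a) / S"
      have l: "0 < l" unfolding l_def using ba Sp by simp
      have "J \<le> (l * S\<^sup>2 + (b - a) / l) / 2" by (rule gen[OF l])
      also have "l * S\<^sup>2 = sqrt (b - a) * S" unfolding l_def using Sp by (simp add: power2_eq_square)
      also have "(b - a) / l = sqrt (b - a) * S"
        unfolding l_def using Sp ba by (simp add: field_simps real_sqrt_mult[symmetric] flip: power2_eq_square)
      finally show ?thesis unfolding J_def by (simp add: mult.commute)
    qed
  qed
qed

lemma gamma_ge:
  fixes \<gamma> :: "nat \<Rightarrow> real"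
  assumes mono: "mono \<gamma>" and lim: "filterlim \<gamma> at_top sequentially" and n: "n \<ge> gamma_inv \<gamma> \<alpha>"
  shows "real \<alpha> \<le> \<gamma> n"
proof -
  have "eventually (\<lambda>k. real \<alpha> \<le> \<gamma> k) sequentially"
    using lim by (simp add: filterlim_at_top)
  then obtain k where "real \<alpha> \<le> \<gamma> k" by (auto simp: eventually_sequentially)
  then have "real \<alpha> \<le> \<gamma> (gamma_inv \<gamma> \<alpha>)"
    unfolding gamma_inv_def by (rule LeastI)
  also have "\<dots> \<le> \<gamma> n" using mono n by (rule monoD)
  finally show ?thesis .
qed

lemma exp_bound_tail:
  fixes c T x :: real
  assumes c: "0 < c" and T: "1 \<le> T" and x: "T \<le> \<bar>x\<bar>"
  shows "exp (- c * x\<^sup>2 / 2) \<le> exp (- c * T\<^sup>2 / 2) * exp (-c * (\<bar>x\<bar> - T))"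
proof -
  have "0 \<le> (\<bar>x\<bar> - T) * (\<bar>x\<bar> + T - 2)" using T x by (intro mult_nonneg_nonneg) auto
  then have "T\<^sup>2 + 2 * (\<bar>x\<bar> - T) \<le> x\<^sup>2"
    by (simp add: power2_eq_square algebra_simps abs_mult_self_eq)
  then have "c * (T\<^sup>2 + 2 * (\<bar>x\<bar> - T)) \<le> c * x\<^sup>2" using c by (intro mult_left_mono) auto
  then have "- c * x\<^sup>2 / 2 \<le> - c * T\<^sup>2 / 2 + (-c * (\<bar>x\<bar> - T))" by (simp add: algebra_simps)
  then show ?thesis by (simp flip: exp_add)
qed

theorem corollary4p4:
  fixes \<alpha> :: nat and \<epsilon> :: real
  assumes "\<alpha> \<ge> 1" and "0 < \<epsilon>" and "\<epsilon> < 1"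
  shows "\<exists>C. \<forall>(\<gamma>::nat \<Rightarrow> real) (G::nat \<Rightarrow> real \<Rightarrow> real) (n::nat).
     (\<forall>m. \<gamma> m \<ge> 0) \<and> mono \<gamma> \<and> filterlim \<gamma> at_top sequentially \<and>
     (\<forall>\<tau><\<alpha>. \<forall>a b. abs_cont_on_interval (G \<tau>) a b) \<and>
     (\<forall>\<tau><\<alpha>. AE x in lborel. (G \<tau> has_real_derivative G (Suc \<tau>) x) (at x)) \<and>
     G \<alpha> \<in> borel_measurable lborel \<and> integrable lborel (\<lambda>x. (G \<alpha> x)\<^sup>2) \<and>
     bdd_above ((\<lambda>ab. star_norm_term \<alpha> G (fst ab) (snd ab)) ` {(a, b). a \<le> b}) \<and>
     bdd_above ((\<lambda>p. decay_norm_term \<epsilon> G (fst p) (snd p)) ` (UNIV \<times> {..<\<alpha>})) \<and>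
     n \<ge> gamma_inv \<gamma> \<alpha> \<and> n \<ge> 2
     \<longrightarrow> \<bar>(LINT x|lborel. G 0 x) -
           trap_rule n (sqrt (2 / (1 - \<epsilon>) * \<gamma> n * ln (real n))) (G 0)\<bar>
         \<le> C * (star_norm \<alpha> G + decay_norm \<alpha> \<epsilon> G) *
             (\<gamma> n * ln (real n)) powr (real \<alpha> / 2 + 1 / 4) / real n ^ \<alpha>"
proof -
  define c where "c = 1 - \<epsilon>"
  have c: "0 < c" "c \<le> 1" using assms unfolding c_def by auto
  define m where "m = \<alpha> - 1"
  have m: "Suc m = \<alpha>" "m < \<alpha>" using assms(1) unfolding m_def by auto
  define p where "p = real \<alpha> / 2 + 1 / 4"
  define C0 where "C0 = Acon m * (1 + 2 * real m) + 2 / c"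
  define C where "C = C0 * (8 / c) powr p"
  show ?thesis
  proof (rule exI[of _ C], intro allI impI)
    fix \<gamma> :: "nat \<Rightarrow> real" and G :: "nat \<Rightarrow> real \<Rightarrow> real" and n :: nat
    assume H: "(\<forall>m. \<gamma> m \<ge> 0) \<and> mono \<gamma> \<and> filterlim \<gamma> at_top sequentially \<and>
     (\<forall>\<tau><\<alpha>. \<forall>a b. abs_cont_on_interval (G \<tau>) a b) \<and>
     (\<forall>\<tau><\<alpha>. AE x in lborel. (G \<tau> has_real_derivative G (Suc \<tau>) x) (at x)) \<and>
     G \<alpha> \<in> borel_measurable lborel \<and> integrable lborel (\<lambda>x. (G \<alpha> x)\<^sup>2) \<and>
     bdd_above ((\<lambda>ab. star_norm_term \<alpha> G (fst ab) (snd ab)) ` {(a, b). a \<le> b}) \<and>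
     bdd_above ((\<lambda>p. decay_norm_term \<epsilon> G (fst p) (snd p)) ` (UNIV \<times> {..<\<alpha>})) \<and>
     n \<ge> gamma_inv \<gamma> \<alpha> \<and> n \<ge> 2"
    have mono: "mono \<gamma>" and lim: "filterlim \<gamma> at_top sequentially"
      and AC: "\<And>\<tau> a b. \<tau> < \<alpha> \<Longrightarrow> abs_cont_on_interval (G \<tau>) a b"
      and AE: "\<And>\<tau>. \<tau> < \<alpha> \<Longrightarrow> AE x in lborel. (G \<tau> has_real_derivative G (Suc \<tau>) x) (at x)"
      and Gm: "G \<alpha> \<in> borel_measurable lborel" and Gi: "integrable lborel (\<lambda>x. (G \<alpha> x)\<^sup>2)"
      and bddS: "bdd_above ((\<lambda>ab. star_norm_term \<alpha> G (fst ab) (snd ab)) ` {(a, b). a \<le> b})"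
      and bddD: "bdd_above ((\<lambda>p. decay_norm_term \<epsilon> G (fst p) (snd p)) ` (UNIV \<times> {..<\<alpha>}))"
      and ninv: "n \<ge> gamma_inv \<gamma> \<alpha>" and n2: "n \<ge> 2"
      using H by auto
    define S where "S = star_norm \<alpha> G"
    define D where "D = decay_norm \<alpha> \<epsilon> G"
    define L where "L = \<gamma> n * ln (real n)"
    define T where "T = sqrt (2 / (1 - \<epsilon>) * \<gamma> n * ln (real n))"
    define h where "h = 2 * T / real n"
    define w where "w x = \<bar>G \<alpha> x\<bar>" for x
    have ga: "real \<alpha> \<le> \<gamma> n" by (rule gamma_ge[OF mono lim ninv])
    have ga1: "1 \<le> \<gamma> n" using ga assms(1) by linarith
    have ln2: "2/3 \<le> ln (real n)"
    proof -
      have "2/3 \<le> ln (2::real)" by (rule ln2_ge_two_thirds)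
      also have "\<dots> \<le> ln (real n)" using n2 by simp
      finally show ?thesis .
    qed
    have L23: "2/3 \<le> L"
    proof -
      have "1 * (2/3) \<le> \<gamma> n * ln (real n)" using ga1 ln2 by (intro mult_mono) auto
      then show ?thesis unfolding L_def by simp
    qed
    have Lpos: "0 < L" using L23 by simp
    have Targ: "0 \<le> 2 / (1 - \<epsilon>) * \<gamma> n * ln (real n)"
    proof -
      have "0 \<le> \<gamma> n * ln (real n)" using Lpos unfolding L_def by simp
      moreover have "0 \<le> 2 / (1 - \<epsilon>)" using c unfolding c_def by simp
      ultimately have "0 \<le> 2 / (1 - \<epsilon>) * (\<gamma> n * ln (real n))" by (rule mult_nonneg_nonneg[rotated])
      then show ?thesis by (simp only: mult.assoc)
    qed
    have T2: "T\<^sup>2 = 2 * L / c"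
    proof -
      have "T\<^sup>2 = 2 / (1 - \<epsilon>) * \<gamma> n * ln (real n)" unfolding T_def using Targ by (rule real_sqrt_pow2)
      also have "\<dots> = 2 * L / c" unfolding L_def c_def by simp
      finally show ?thesis .
    qed
    have Tpos: "0 \<le> T" unfolding T_def using Targ by (rule real_sqrt_ge_zero)
    have T1: "1 \<le> T"
    proof -
      have "2 * L / c \<ge> 2 * L" using c Lpos by (simp add: field_simps mult_left_le)
      then have "1 \<le> T\<^sup>2" using T2 L23 by simp
      show ?thesis
      proof (rule ccontr)
        assume "\<not> 1 \<le> T"
        then have T1': "T < 1" by simp
        then have "T * T \<le> T * 1" using Tpos by (intro mult_left_mono) auto
        then have "T\<^sup>2 < 1" using T1' by (simp add: power2_eq_square)
        then show False using \<open>1 \<le> T\<^sup>2\<close> by simp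
      qed
    qed
    have cTL: "c * T\<^sup>2 / 2 = L" using T2 c by simp
    have npos: "0 < real n" using n2 by simp
    have hpos: "0 < h" unfolding h_def using T1 npos by simp
    have nh: "real n * h = 2 * T" unfolding h_def using npos by simp
    have aT: "- T + real n * h = T" using nh by simp
    have h2T: "h \<le> 2 * T" unfolding h_def using n2 T1 by (simp add: divide_le_eq)
    \<comment> \<open>regularity\<close>
    have der: "\<And>i x. i < m \<Longrightarrow> (G i has_real_derivative G (Suc i) x) (at x)"
    proof -
      fix i x assume i: "i < m"
      show "(G i has_real_derivative G (Suc i) x) (at x)"
        by (rule deriv_everywhere) (use AC AE i m in auto)
    qed
    have contm: "continuous_on UNIV (G m)" by (rule ac_cont_UNIV) (use AC m in auto)
    have cont0: "continuous_on UNIV (G 0)" by (rule ac_cont_UNIV) (use AC assms(1) in auto)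
    have wint: "w integrable_on {u..v}" for u v
      unfolding w_def by (rule sq_abs_integrable(1)[OF Gm Gi])
    have wpos: "\<And>x. 0 \<le> w x" unfolding w_def by simp
    have osc: "\<bar>G m v - G m u\<bar> \<le> integral {u..v} w" if "u \<le> v" for u v
    proof -
      have i: "(\<lambda>x. \<bar>G (Suc m) x\<bar>) integrable_on {u..v}"
        using sq_abs_integrable(1)[OF Gm Gi] m(1) by simp
      have a1: "\<forall>a b. abs_cont_on_interval (G m) a b" using AC m by auto
      have a2: "AE x in lborel. (G m has_real_derivative G (Suc m) x) (at x)" using AE m by auto
      have "\<bar>G m v - G m u\<bar> \<le> integral {u..v} (\<lambda>x. \<bar>G (Suc m) x\<bar>)"
        by (rule ineq_ae[OF a1 a2 i that])
      then show ?thesis using m unfolding w_def by simp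
    qed
    \<comment> \<open>decay\<close>
    have decay: "\<bar>G \<tau> x\<bar> \<le> D * exp (- c * x\<^sup>2 / 2)" if "\<tau> < \<alpha>" for \<tau> x
    proof -
      have "decay_norm_term \<epsilon> G x \<tau> \<le> D"
        unfolding D_def decay_norm_def
        using cSUP_upper[OF _ bddD, of "(x, \<tau>)"] that by simp
      then have "exp (c * x\<^sup>2 / 2) * \<bar>G \<tau> x\<bar> \<le> D"
        unfolding decay_norm_term_def c_def by (simp add: abs_mult)
      then have "\<bar>G \<tau> x\<bar> \<le> D / exp (c * x\<^sup>2 / 2)" by (simp add: field_simps)
      also have "\<dots> = D * exp (- c * x\<^sup>2 / 2)" by (simp add: exp_minus field_simps)
      finally show ?thesis .
    qed
    have D0: "0 \<le> D"
    proof -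
      have "0 \<le> \<bar>G 0 0\<bar>" by simp
      also have "\<dots> \<le> D * exp (- c * 0\<^sup>2 / 2)" using decay[of 0 0] assms(1) by simp
      finally show ?thesis by simp
    qed
    \<comment> \<open>star norm\<close>
    define B where "B = integral {-T..T} (\<lambda>x. (G \<alpha> x)\<^sup>2)"
    have B0: "0 \<le> B" unfolding B_def by (rule integral_nonneg[OF sq_abs_integrable(2)[OF Gm Gi]]) auto
    have SB: "sqrt B \<le> S"
    proof -
      have "star_norm_term \<alpha> G (-T) T \<le> S"
        unfolding S_def star_norm_def
        using cSUP_upper[OF _ bddS, of "(-T, T)"] Tpos by simp
      moreover have "star_norm_term \<alpha> G (-T) T =
          sqrt ((\<Sum>\<tau><\<alpha>. (LINT x:{-T..T}|lborel. G \<tau> x)\<^sup>2) + B)"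
        unfolding star_norm_term_def B_def using sq_abs_integrable(3)[OF Gm Gi, of "-T" T] by simp
      moreover have "sqrt B \<le> sqrt ((\<Sum>\<tau><\<alpha>. (LINT x:{-T..T}|lborel. G \<tau> x)\<^sup>2) + B)"
        by (intro real_sqrt_le_mono) (simp add: sum_nonneg)
      ultimately show ?thesis by linarith
    qed
    have S0: "0 \<le> S" using SB real_sqrt_ge_zero[OF B0] by linarith
    have BS: "B \<le> S\<^sup>2"
    proof -
      have "B = (sqrt B)\<^sup>2" using B0 by simp
      also have "\<dots> \<le> S\<^sup>2" using SB B0 by (intro power_mono) auto
      finally show ?thesis .
    qed
    define J where "J = integral {-T..T} w"
    have J: "J \<le> sqrt (2 * T) * S"
    proof -
      have "integral {-T..T} (\<lambda>x. \<bar>G \<alpha> x\<bar>) \<le> sqrt (T - - T) * S"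
        by (rule amgm_int[OF sq_abs_integrable(2)[OF Gm Gi] sq_abs_integrable(1)[OF Gm Gi]])
           (use Tpos BS S0 in \<open>auto simp: B_def\<close>)
      then show ?thesis unfolding J_def w_def by simp
    qed
    have J0: "0 \<le> J" unfolding J_def by (rule integral_nonneg[OF wint]) (use wpos in auto)
    \<comment> \<open>quadrature error\<close>
    define \<beta> where "\<beta> = 2 * D * exp (- L)"
    have \<beta>0: "0 \<le> \<beta>" unfolding \<beta>_def using D0 by simp
    have bd: "\<bar>G l (-T + real n * h) - G l (-T)\<bar> \<le> \<beta>" if "l < m" for l
    proof -
      have l: "l < \<alpha>" using that m by simp
      have e: "exp (- c * T\<^sup>2 / 2) = exp (- L)" using cTL by (simp add: algebra_simps)
      have "\<bar>G l T - G l (-T)\<bar> \<le> \<bar>G l T\<bar> + \<bar>G l (-T)\<bar>" by simp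
      also have "\<dots> \<le> D * exp (- c * T\<^sup>2 / 2) + D * exp (- c * (-T)\<^sup>2 / 2)"
        using decay[OF l, of T] decay[OF l, of "-T"] by (intro add_mono) auto
      also have "\<dots> = \<beta>" unfolding \<beta>_def using e by simp
      finally show ?thesis using aT by simp
    qed
    have Ebound: "\<bar>Eq (G 0) (-T) h n\<bar> \<le> Acon (m-0) * Pb h (integral {-T..-T + real n * h} w) \<beta> (m-0)"
    proof (rule E_bound[OF hpos der contm _ _ wpos bd \<beta>0])
      show "\<And>u v. -T \<le> u \<Longrightarrow> u \<le> v \<Longrightarrow> v \<le> -T + real n * h \<Longrightarrow> \<bar>G m v - G m u\<bar> \<le> integral {u..v} w"
        using osc by blast
      show "w integrable_on {-T..-T + real n * h}" by (rule wint)
    qed auto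
    then have Eb: "\<bar>Eq (G 0) (-T) h n\<bar> \<le> Acon m * Pb h J \<beta> m"
      unfolding aT J_def by simp
    define I where "I = integral {-T..T} (G 0)"
    have trap: "trap_rule n T (G 0) = h * (\<Sum>j<n. G 0 (-T + real j * h))"
      unfolding trap_rule_def h_def by (simp add: algebra_simps)
    have EqI: "Eq (G 0) (-T) h n = I - trap_rule n T (G 0)"
      unfolding Eq_def I_def trap aT ..
    \<comment> \<open>tail\<close>
    define K where "K = D * exp (- L)"
    have tailb: "\<bar>G 0 x\<bar> \<le> K * exp (- c * (\<bar>x\<bar> - T))" if "T \<le> \<bar>x\<bar>" for x
    proof -
      have "\<bar>G 0 x\<bar> \<le> D * exp (- c * x\<^sup>2 / 2)" using decay[of 0 x] assms(1) by simp
      also have "\<dots> \<le> D * (exp (- c * T\<^sup>2 / 2) * exp (-c * (\<bar>x\<bar> - T)))"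
        using exp_bound_tail[OF c(1) T1 that] D0 by (rule mult_left_mono)
      also have "exp (- c * T\<^sup>2 / 2) = exp (- L)" using cTL by (simp add: algebra_simps)
      finally show ?thesis unfolding K_def by (simp add: mult.assoc)
    qed
    have tail: "\<bar>(LINT x|lborel. G 0 x) - I\<bar> \<le> 2 * K / c"
      unfolding I_def by (rule tail_total(2)[OF cont0 c(1) Tpos tailb])
    \<comment> \<open>final estimates\<close>
    have expL: "exp (- L) \<le> 1 / real n ^ \<alpha>"
    proof -
      have "exp (- L) \<le> exp (- (real \<alpha> * ln (real n)))"
        unfolding L_def using ga ln2 by (intro exp_mono) (simp add: mult_right_mono)
      also have "exp (- (real \<alpha> * ln (real n))) = 1 / real n ^ \<alpha>"
        using npos by (simp add: exp_minus ln_realpow[symmetric] inverse_eq_divide)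
      finally show ?thesis .
    qed
    define Q where "Q = (2 * T) ^ \<alpha> * sqrt (2 * T)"
    have T2pos: "1 \<le> 2 * T" using T1 by simp
    have Qpowr: "Q = (2 * T) powr (2 * p)"
    proof -
      have "(2 * T) powr (2 * p) = (2 * T) powr (real \<alpha> + 1/2)" unfolding p_def by (simp add: algebra_simps)
      also have "\<dots> = (2 * T) powr (real \<alpha>) * (2 * T) powr (1/2)" using T1 by (simp add: powr_add)
      also have "\<dots> = Q" unfolding Q_def using T1 by (simp add: powr_realpow powr_half_sqrt)
      finally show ?thesis by simp
    qed
    have Q1: "1 \<le> Q" unfolding Qpowr using T2pos p_def by (intro ge_one_powr_ge_zero) auto
    have Qm: "(2 * T) ^ m \<le> Q"
    proof -
      have "(2 * T) ^ m = (2 * T) powr (real m)" using T1 by (simp add: powr_realpow)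
      also have "\<dots> \<le> (2 * T) powr (2 * p)" using T2pos m unfolding p_def by (intro powr_mono) auto
      finally show ?thesis unfolding Qpowr .
    qed
    have QL: "Q = (8 / c) powr p * L powr p"
    proof -
      have "Q = ((2 * T) powr 2) powr p" unfolding Qpowr powr_powr by (simp add: mult.commute)
      also have "(2 * T) powr 2 = 8 / c * L" using T1 T2 by (simp add: powr_realpow power_mult_distrib field_simps)
      also have "(8 / c * L) powr p = (8 / c) powr p * L powr p" by (rule powr_mult)
      finally show ?thesis .
    qed
    have sumh: "(\<Sum>l\<in>{1..m}. h ^ l) \<le> real m * (2 * T) ^ m"
    proof -
      have "(\<Sum>l\<in>{1..m}. h ^ l) \<le> (\<Sum>l\<in>{1..m}. (2 * T) ^ m)"
      proof (rule sum_mono)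
        fix l assume l: "l \<in> {1..m}"
        have "h ^ l \<le> (2 * T) ^ l" using hpos h2T by (intro power_mono) auto
        also have "\<dots> \<le> (2 * T) ^ m" using T2pos l by (intro power_increasing) auto
        finally show "h ^ l \<le> (2 * T) ^ m" .
      qed
      then show ?thesis by simp
    qed
    have hpow: "h ^ (m + 1) = (2 * T) ^ \<alpha> / real n ^ \<alpha>"
      unfolding h_def using m by (simp add: power_divide)
    have Pbb: "Pb h J \<beta> m \<le> (Q * S + 2 * D * real m * Q) / real n ^ \<alpha>"
    proof -
      have t1: "h ^ (m + 1) * J \<le> Q * S / real n ^ \<alpha>"
      proof -
        have "h ^ (m + 1) * J \<le> (2 * T) ^ \<alpha> / real n ^ \<alpha> * (sqrt (2 * T) * S)"
          unfolding hpow using J npos Tpos by (intro mult_left_mono) auto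
        then show ?thesis unfolding Q_def by (simp add: field_simps)
      qed
      have t2: "\<beta> * (\<Sum>l\<in>{1..m}. h ^ l) \<le> 2 * D * real m * Q / real n ^ \<alpha>"
      proof -
        have "\<beta> * (\<Sum>l\<in>{1..m}. h ^ l) \<le> (2 * D / real n ^ \<alpha>) * (real m * Q)"
        proof (rule mult_mono)
          show "\<beta> \<le> 2 * D / real n ^ \<alpha>" unfolding \<beta>_def using expL D0
            by (metis mult_left_mono times_divide_eq_right mult.assoc mult_nonneg_nonneg zero_le_numeral mult_1_right)
          show "(\<Sum>l\<in>{1..m}. h ^ l) \<le> real m * Q"
            using sumh Qm by (meson mult_left_mono of_nat_0_le_iff order_trans)
        qed (use D0 npos Q1 hpos in \<open>auto intro: sum_nonneg\<close>)
        then show ?thesis by (simp add: field_simps)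
      qed
      show ?thesis unfolding Pb_def using t1 t2 by (simp add: add_divide_distrib)
    qed
    have Eb2: "\<bar>I - trap_rule n T (G 0)\<bar> \<le> Acon m * (Q * S + 2 * D * real m * Q) / real n ^ \<alpha>"
    proof -
      have "\<bar>I - trap_rule n T (G 0)\<bar> \<le> Acon m * Pb h J \<beta> m" using Eb EqI by simp
      also have "\<dots> \<le> Acon m * ((Q * S + 2 * D * real m * Q) / real n ^ \<alpha>)"
        using Pbb Acon_pos[of m] by (intro mult_left_mono) auto
      finally show ?thesis by simp
    qed
    have tail2: "\<bar>(LINT x|lborel. G 0 x) - I\<bar> \<le> 2 * D * Q / c / real n ^ \<alpha>"
    proof -
      have "2 * K / c \<le> 2 * (D * (1 / real n ^ \<alpha>)) / c"
        unfolding K_def using expL D0 c by (intro divide_right_mono mult_left_mono) auto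
      also have "\<dots> \<le> 2 * D * Q / c / real n ^ \<alpha>"
        using Q1 D0 c npos by (simp add: field_simps mult_left_mono)
      finally show ?thesis using tail by linarith
    qed
    have total: "\<bar>(LINT x|lborel. G 0 x) - trap_rule n T (G 0)\<bar>
        \<le> (Acon m * (Q * S + 2 * D * real m * Q) + 2 * D * Q / c) / real n ^ \<alpha>"
      using Eb2 tail2 by (simp add: add_divide_distrib)
    have num: "Acon m * (Q * S + 2 * D * real m * Q) + 2 * D * Q / c \<le> C0 * (S + D) * Q"
    proof -
      have A1: "1 \<le> Acon m" by (rule Acon_pos)
      have QS: "0 \<le> Q * S" "0 \<le> Q * D" using Q1 S0 D0 by auto
      have AQ: "0 \<le> Acon m * (Q * S)" "0 \<le> Acon m * (Q * D)" using QS A1 by simp_all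
      have e1: "Acon m * (Q * S) \<le> Acon m * (1 + 2 * real m) * (Q * S)"
      proof -
        have "Acon m * (Q * S) * 1 \<le> Acon m * (Q * S) * (1 + 2 * real m)"
          by (rule mult_left_mono) (use AQ in auto)
        then show ?thesis by (simp add: mult_ac)
      qed
      have e2: "Acon m * (2 * D * real m * Q) \<le> Acon m * (1 + 2 * real m) * (Q * D)"
      proof -
        have "Acon m * (Q * D) * (2 * real m) \<le> Acon m * (Q * D) * (1 + 2 * real m)"
          by (rule mult_left_mono) (use AQ in auto)
        then show ?thesis by (simp add: mult_ac)
      qed
      have e3: "0 \<le> Acon m * (1 + 2 * real m) * (Q * D)" "0 \<le> Acon m * (1 + 2 * real m) * (Q * S)"
        using QS A1 by auto
      have e4: "0 \<le> 2 / c * (Q * S)" using QS c by auto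
      have "C0 * (S + D) * Q = Acon m * (1 + 2 * real m) * (Q * S) + Acon m * (1 + 2 * real m) * (Q * D) + 2 / c * (Q * S) + 2 / c * (Q * D)"
        unfolding C0_def by (simp add: algebra_simps add_divide_distrib)
      moreover have "2 * D * Q / c = 2 / c * (Q * D)" by (simp add: field_simps)
      ultimately show ?thesis using e1 e2 e3 e4 by (simp add: algebra_simps)
    qed
    have "\<bar>(LINT x|lborel. G 0 x) - trap_rule n T (G 0)\<bar> \<le> C0 * (S + D) * Q / real n ^ \<alpha>"
      using total num npos by (smt (verit) divide_right_mono zero_le_power of_nat_0_le_iff)
    also have "\<dots> = C * (S + D) * L powr p / real n ^ \<alpha>"
      unfolding QL C_def by (simp add: algebra_simps)
    finally show "\<bar>(LINT x|lborel. G 0 x) - trap_rule n (sqrt (2 / (1 - \<epsilon>) * \<gamma> n * ln (real n))) (G 0)\<bar>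
         \<le> C * (star_norm \<alpha> G + decay_norm \<alpha> \<epsilon> G) *
             (\<gamma> n * ln (real n)) powr (real \<alpha> / 2 + 1 / 4) / real n ^ \<alpha>"
      unfolding S_def D_def L_def p_def T_def .
  qed
qed

end
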